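(* Let $d,k\geq2$. Suppose that $\Lambda\leq\mathrm{AAut}(\mathcal{T}_{d,k})$ contains a translation and that $G\leq\mathrm{AAut}(\mathcal{T}_{d,k})$ commensurates $\Lambda$. Then there exists a proper ball $B\subseteq\partial\mathcal{T}_{d,k}$ such that $[G_B,G_B]\leq\Lambda$. If additionally $L\leq[G_B,G_B]$ is a subgroup with no proper finite index subgroup, then $\Lambda$ contains the subgroup generated by all $G$-conjugates of $L$.
   Context: $\mathcal{T}_{d,k}$ is the rooted tree whose root $r$ has degree $k$ and all other vertices have degree $d+1$. Its boundary $\partial\mathcal{T}_{d,k}$ is the set of rays $(r=\xi_0,\xi_1,\dots)$ with $\xi_{n+1}$ a child of $\xi_n$; with $N(\xi,\xi')$ the largest $n$ such that $\xi_n=\xi'_n$, put $\mathrm{dist}(\xi,\xi')=d^{-N(\xi,\xi')}$. A homothety is a map multiplying all distances by a fixed positive constant. An almost automorphism is a homeomorphism $g$ of $\partial\mathcal{T}_{d,k}$ for which there is a partition of $\partial\mathcal{T}_{d,k}$ into finitely many proper balls $B_1,\dots,B_n$ with each $g|_{B_i}:B_i\to g(B_i)$ a homothety; $\mathrm{AAut}(\mathcal{T}_{d,k})$ is the group of almost automorphisms. An element $h$ is a translation if there is a ball $B$ and $n\in\mathbb{Z}$ with $h^n|_B:B\to h^n(B)$ a homothety and $h^n(B)\subsetneq B$. For a ball $B$, $G_B$ denotes the subgroup of elements of $G$ acting trivially on $\partial\mathcal{T}_{d,k}\setminus B$. $G$ commensurates $\Lambda$ if $g\Lambda g^{-1}\cap\Lambda$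 has finite index in $\Lambda$ for all $g\in G$. *)

theory Defs
  imports Complex_Main "HOL-Algebra.Algebra"
begin

text \<open>A ray (r = xi_0, xi_1, ...) is encoded by the sequence of child
  indices: xi 0 < k is the child of the root chosen at step 1, and xi n < d (n >= 1)
  the child chosen at step n+1. Vertex xi_n of the ray is the prefix of length n.\<close>

type_synonym ray = "nat \<Rightarrow> nat"

definition boundary :: "nat \<Rightarrow> nat \<Rightarrow> ray set" where
  "boundary d k = {\<xi>. \<xi> 0 < k \<and> (\<forall>n\<ge>1. \<xi> n < d)}"

text \<open>N(xi,xi') is the largest n with equal level-n vertices, i.e. the length of the
  common prefix = least index where the sequences differ; dist = d^(-N), and 0 on the diagonal.\<close>

definition tdist :: "nat \<Rightarrow> ray \<Rightarrow> ray \<Rightarrow> real" where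
  "tdist d \<xi> \<eta> = (if \<xi> = \<eta> then 0 else 1 / real d ^ (LEAST n. \<xi> n \<noteq> \<eta> n))"

definition is_ball :: "nat \<Rightarrow> nat \<Rightarrow> ray set \<Rightarrow> bool" where
  "is_ball d k B \<longleftrightarrow> (\<exists>\<xi>\<in>boundary d k. \<exists>r>0. B = {\<eta>\<in>boundary d k. tdist d \<xi> \<eta> \<le> r})"

definition proper_ball :: "nat \<Rightarrow> nat \<Rightarrow> ray set \<Rightarrow> bool" where
  "proper_ball d k B \<longleftrightarrow> is_ball d k B \<and> B \<noteq> boundary d k"

definition homothety_on :: "nat \<Rightarrow> ray set \<Rightarrow> (ray \<Rightarrow> ray) \<Rightarrow> bool" where
  "homothety_on d B f \<longleftrightarrow>
     (\<exists>c>0. \<forall>x\<in>B. \<forall>y\<in>B. tdist d (f x) (f y) = c * tdist d x y)"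

definition tcont_on :: "nat \<Rightarrow> ray set \<Rightarrow> (ray \<Rightarrow> ray) \<Rightarrow> bool" where
  "tcont_on d S f \<longleftrightarrow>
     (\<forall>x\<in>S. \<forall>e>0. \<exists>\<delta>>0. \<forall>y\<in>S. tdist d x y < \<delta> \<longrightarrow> tdist d (f x) (f y) < e)"

definition homeomorphism_bd :: "nat \<Rightarrow> nat \<Rightarrow> (ray \<Rightarrow> ray) \<Rightarrow> bool" where
  "homeomorphism_bd d k g \<longleftrightarrow>
     bij_betw g (boundary d k) (boundary d k) \<and> tcont_on d (boundary d k) g \<and>
     tcont_on d (boundary d k) (inv_into (boundary d k) g)"

text \<open>Almost automorphisms, normalised to act as the identity off the boundary.\<close>

definition almost_aut :: "nat \<Rightarrow> nat \<Rightarrow> (ray \<Rightarrow> ray) \<Rightarrow> bool" where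
  "almost_aut d k g \<longleftrightarrow>
     homeomorphism_bd d k g \<and> (\<forall>x. x \<notin> boundary d k \<longrightarrow> g x = x) \<and>
     (\<exists>P. finite P \<and> (\<forall>B\<in>P. proper_ball d k B) \<and>
          (\<forall>B1\<in>P. \<forall>B2\<in>P. B1 \<noteq> B2 \<longrightarrow> B1 \<inter> B2 = {}) \<and>
          \<Union>P = boundary d k \<and> (\<forall>B\<in>P. homothety_on d B g))"

definition AAut :: "nat \<Rightarrow> nat \<Rightarrow> (ray \<Rightarrow> ray) monoid" where
  "AAut d k = \<lparr>carrier = {g. almost_aut d k g}, monoid.mult = (\<circ>), one = id\<rparr>"

definition translation :: "nat \<Rightarrow> nat \<Rightarrow> (ray \<Rightarrow> ray) \<Rightarrow> bool" where
  "translation d k h \<longleftrightarrow> h \<in> carrier (AAut d k) \<and>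
     (\<exists>B (n::int). is_ball d k B \<and> homothety_on d B (h [^]\<^bsub>AAut d k\<^esub> n) \<and>
        (h [^]\<^bsub>AAut d k\<^esub> n) ` B \<subset> B)"

definition rigid_stab :: "nat \<Rightarrow> nat \<Rightarrow> (ray \<Rightarrow> ray) set \<Rightarrow> ray set \<Rightarrow> (ray \<Rightarrow> ray) set" where
  "rigid_stab d k G B = {g\<in>G. \<forall>x\<in>boundary d k - B. g x = x}"

definition conj_set :: "nat \<Rightarrow> nat \<Rightarrow> (ray \<Rightarrow> ray) \<Rightarrow> (ray \<Rightarrow> ray) set \<Rightarrow> (ray \<Rightarrow> ray) set" where
  "conj_set d k g H = (\<lambda>h. g \<otimes>\<^bsub>AAut d k\<^esub> h \<otimes>\<^bsub>AAut d k\<^esub> inv\<^bsub>AAut d k\<^esub> g) ` H"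

definition finite_index_in :: "nat \<Rightarrow> nat \<Rightarrow> (ray \<Rightarrow> ray) set \<Rightarrow> (ray \<Rightarrow> ray) set \<Rightarrow> bool" where
  "finite_index_in d k H K \<longleftrightarrow> finite (rcosets\<^bsub>(AAut d k)\<lparr>carrier := K\<rparr>\<^esub> H)"

definition commensurates :: "nat \<Rightarrow> nat \<Rightarrow> (ray \<Rightarrow> ray) set \<Rightarrow> (ray \<Rightarrow> ray) set \<Rightarrow> bool" where
  "commensurates d k G \<Lambda> \<longleftrightarrow> (\<forall>g\<in>G. finite_index_in d k (conj_set d k g \<Lambda> \<inter> \<Lambda>) \<Lambda>)"

definition no_proper_fi_subgroup :: "nat \<Rightarrow> nat \<Rightarrow> (ray \<Rightarrow> ray) set \<Rightarrow> bool" where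
  "no_proper_fi_subgroup d k L \<longleftrightarrow>
     (\<forall>H. subgroup H (AAut d k) \<and> H \<subseteq> L \<and> finite_index_in d k H L \<longrightarrow> H = L)"

end

theory Submission
  imports Defs
begin


definition cyl :: "nat \<Rightarrow> nat \<Rightarrow> ray \<Rightarrow> nat \<Rightarrow> ray set" where
  "cyl d k p n = {\<eta> \<in> boundary d k. \<forall>i<n. \<eta> i = p i}"

lemma inv_pow_le_iff:
  assumes "d \<ge> (2::nat)"
  shows "1 / real d ^ N \<le> 1 / real d ^ n \<longleftrightarrow> n \<le> N"
proof -
  have d1: "real d > 1" using assms by auto
  have p: "real d ^ N > 0" "real d ^ n > 0" using d1 by auto
  have "1 / real d ^ N \<le> 1 / real d ^ n \<longleftrightarrow> real d ^ n \<le> real d ^ N"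
    using p by (simp add: divide_le_eq le_divide_eq)
  also have "\<dots> \<longleftrightarrow> n \<le> N" using d1 by simp
  finally show ?thesis .
qed
lemma inv_pow_lt_iff:
  assumes "d \<ge> (2::nat)"
  shows "1 / real d ^ N < 1 / real d ^ n \<longleftrightarrow> n < N"
  using inv_pow_le_iff[OF assms, of n N] by (meson not_le)

lemma tdist_sym: "tdist d x y = tdist d y x"
  unfolding tdist_def by (auto simp: eq_commute)

lemma tdist_nonneg: "0 \<le> tdist d x y"
  unfolding tdist_def by auto

lemma tdist_self[simp]: "tdist d x x = 0"
  unfolding tdist_def by auto

lemma tdist_neq: "x \<noteq> y \<Longrightarrow> tdist d x y = 1 / real d ^ (LEAST n. x n \<noteq> y n)"
  unfolding tdist_def by auto

lemma tdist_le_iff: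
  assumes "d \<ge> 2"
  shows "tdist d x y \<le> 1 / real d ^ n \<longleftrightarrow> (\<forall>i<n. x i = y i)"
proof (cases "x = y")
  case True then show ?thesis by auto
next
  case False
  define N where "N = (LEAST n. x n \<noteq> y n)"
  have ex: "\<exists>n. x n \<noteq> y n" using False by auto
  have xN: "x N \<noteq> y N" unfolding N_def by (rule LeastI_ex[OF ex])
  have lt: "\<And>i. i < N \<Longrightarrow> x i = y i" unfolding N_def using not_less_Least by blast
  have "1 / real d ^ N \<le> 1 / real d ^ n \<longleftrightarrow> n \<le> N" by (rule inv_pow_le_iff[OF assms])
  moreover have "n \<le> N \<longleftrightarrow> (\<forall>i<n. x i = y i)"
    using lt xN by (metis le_less_trans less_le not_le)
  ultimately show ?thesis using False unfolding tdist_def N_def by auto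
qed

lemma tdist_le1: "d \<ge> 2 \<Longrightarrow> tdist d x y \<le> 1"
  using tdist_le_iff[of d x y 0] by simp

lemma tdist_disc: "x \<noteq> y \<Longrightarrow> \<exists>N. tdist d x y = 1 / real d ^ N"
  by (auto simp: tdist_neq)

lemma tdist_form: "tdist d x y = 0 \<or> (\<exists>N. tdist d x y = 1 / real d ^ N)"
  by (cases "x = y") (auto simp: tdist_neq)

lemma tdist_ultra:
  assumes "d \<ge> 2"
  shows "tdist d x z \<le> max (tdist d x y) (tdist d y z)"
proof -
  consider "x = y" | "y = z" | "x \<noteq> y" "y \<noteq> z" by blast
  then show ?thesis
  proof cases
    case 3
    obtain N where N: "max (tdist d x y) (tdist d y z) = 1 / real d ^ N"
    proof -
      obtain N1 N2 where "tdist d x y = 1 / real d ^ N1" "tdist d y z = 1 / real d ^ N2"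
        using tdist_disc[OF 3(1), of d] tdist_disc[OF 3(2), of d] by blast
      then show ?thesis using that by (cases "tdist d x y \<le> tdist d y z") (auto simp: max_def)
    qed
    have "tdist d x y \<le> 1 / real d ^ N" "tdist d y z \<le> 1 / real d ^ N" using N by auto
    then have "\<forall>i<N. x i = y i" "\<forall>i<N. y i = z i" using tdist_le_iff[OF assms] by auto
    then have "tdist d x z \<le> 1 / real d ^ N" using tdist_le_iff[OF assms] by auto
    then show ?thesis using N by simp
  qed auto
qed

lemma tdist_lt_iff:
  assumes "d \<ge> 2"
  shows "tdist d x y < 1 / real d ^ n \<longleftrightarrow> (\<forall>i<Suc n. x i = y i)"
proof
  assume a: "tdist d x y < 1 / real d ^ n"
  show "\<forall>i<Suc n. x i = y i"
  proof (cases "x = y")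
    case False
    then obtain N where N: "tdist d x y = 1 / real d ^ N" using tdist_disc by blast
    have "n < N" using a N inv_pow_lt_iff[OF assms] by simp
    then have "1 / real d ^ N \<le> 1 / real d ^ Suc n" using inv_pow_le_iff[OF assms, of N "Suc n"] by (simp del: power_Suc)
    then show ?thesis using N tdist_le_iff[OF assms, of x y "Suc n"] by simp
  qed auto
next
  assume "\<forall>i<Suc n. x i = y i"
  then have "tdist d x y \<le> 1 / real d ^ Suc n" using tdist_le_iff[OF assms] by blast
  also have "\<dots> < 1 / real d ^ n" using assms by (simp add: divide_strict_left_mono)
  finally show "tdist d x y < 1 / real d ^ n" .
qed

lemma cyl_0[simp]: "cyl d k p 0 = boundary d k"
  unfolding cyl_def by auto

lemma cyl_sub: "cyl d k p n \<subseteq> boundary d k"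
  unfolding cyl_def by auto

lemma cyl_mono: "m \<le> n \<Longrightarrow> cyl d k p n \<subseteq> cyl d k p m"
  unfolding cyl_def by auto

lemma cyl_recenter: "q \<in> cyl d k p n \<Longrightarrow> cyl d k q n = cyl d k p n"
  unfolding cyl_def by auto

lemma cyl_center: "p \<in> boundary d k \<Longrightarrow> p \<in> cyl d k p n"
  unfolding cyl_def by auto

lemma cyl_tdist: "d \<ge> 2 \<Longrightarrow> cyl d k p n = {\<eta>\<in>boundary d k. tdist d p \<eta> \<le> 1 / real d ^ n}"
  unfolding cyl_def using tdist_le_iff[of d p _ n] by auto

lemma cyl_is_ball: "d \<ge> 2 \<Longrightarrow> p \<in> boundary d k \<Longrightarrow> is_ball d k (cyl d k p n)"
  unfolding is_ball_def cyl_tdist by (rule bexI[of _ p], rule exI[of _ "1 / real d ^ n"]) auto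

lemma cyl_proper:
  assumes "k \<ge> 2" "p \<in> boundary d k" "n \<ge> 1"
  shows "cyl d k p n \<noteq> boundary d k"
proof
  assume e: "cyl d k p n = boundary d k"
  define q where "q = p(0 := (if p 0 = 0 then 1 else 0))"
  have "q \<in> boundary d k" using assms unfolding q_def boundary_def by auto
  moreover have "q \<notin> cyl d k p n" using assms unfolding q_def cyl_def
    by (auto split: if_splits elim!: allE[of _ 0])
  ultimately show False using e by blast
qed

lemma cyl_proper_ball:
  "d \<ge> 2 \<Longrightarrow> k \<ge> 2 \<Longrightarrow> p \<in> boundary d k \<Longrightarrow> n \<ge> 1 \<Longrightarrow> proper_ball d k (cyl d k p n)"
  unfolding proper_ball_def using cyl_is_ball cyl_proper by blast

lemma ball_cyl:
  assumes "d \<ge> 2" "is_ball d k B"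
  shows "\<exists>p\<in>boundary d k. \<exists>n. B = cyl d k p n"
proof -
  obtain \<xi> r where \<xi>: "\<xi> \<in> boundary d k" "r > 0" and B: "B = {\<eta>\<in>boundary d k. tdist d \<xi> \<eta> \<le> r}"
    using assms(2) unfolding is_ball_def by blast
  have "\<exists>n. (1 / real d) ^ n < r" using assms(1) \<xi>(2) by (intro real_arch_pow_inv) auto
  then have ex: "\<exists>n. 1 / real d ^ n \<le> r" by (auto simp: power_one_over intro: less_imp_le)
  define n0 where "n0 = (LEAST n. 1 / real d ^ n \<le> r)"
  have n0: "1 / real d ^ n0 \<le> r" unfolding n0_def by (rule LeastI_ex[OF ex])
  have "\<And>\<eta>. tdist d \<xi> \<eta> \<le> r \<longleftrightarrow> tdist d \<xi> \<eta> \<le> 1 / real d ^ n0"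
  proof
    fix \<eta> assume a: "tdist d \<xi> \<eta> \<le> r"
    show "tdist d \<xi> \<eta> \<le> 1 / real d ^ n0"
    proof (cases "\<xi> = \<eta>")
      case False
      then obtain N where N: "tdist d \<xi> \<eta> = 1 / real d ^ N" using tdist_disc by blast
      then have "n0 \<le> N" using a unfolding n0_def by (auto intro: Least_le)
      then show ?thesis using N inv_pow_le_iff[OF assms(1)] by simp
    qed simp
  next
    fix \<eta> assume "tdist d \<xi> \<eta> \<le> 1 / real d ^ n0" then show "tdist d \<xi> \<eta> \<le> r" using n0 by linarith
  qed
  then have "B = cyl d k \<xi> n0" unfolding B cyl_tdist[OF assms(1)] by auto
  then show ?thesis using \<xi> by blast
qed

lemma proper_ball_cyl:
  assumes "d \<ge> 2" "proper_ball d k B"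
  shows "\<exists>p\<in>boundary d k. \<exists>n\<ge>1. B = cyl d k p n"
proof -
  obtain p n where "p \<in> boundary d k" "B = cyl d k p n"
    using ball_cyl[OF assms(1)] assms(2) unfolding proper_ball_def by blast
  moreover have "n \<noteq> 0" using assms(2) calculation unfolding proper_ball_def by auto
  ultimately show ?thesis by (intro bexI[of _ p] exI[of _ n]) auto
qed



lemma aa_carrier: "g \<in> carrier (AAut d k) \<longleftrightarrow> almost_aut d k g"
  by (simp add: AAut_def)

lemma aa_bij: "almost_aut d k g \<Longrightarrow> bij_betw g (boundary d k) (boundary d k)"
  unfolding almost_aut_def homeomorphism_bd_def by blast

lemma aa_out: "almost_aut d k g \<Longrightarrow> x \<notin> boundary d k \<Longrightarrow> g x = x"
  unfolding almost_aut_def by blast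

lemma aa_cont: "almost_aut d k g \<Longrightarrow> tcont_on d (boundary d k) g"
  unfolding almost_aut_def homeomorphism_bd_def by blast

lemma aa_inv_cont: "almost_aut d k g \<Longrightarrow> tcont_on d (boundary d k) (inv_into (boundary d k) g)"
  unfolding almost_aut_def homeomorphism_bd_def by blast

lemma arch_inv_pow:
  assumes "d \<ge> (2::nat)" "\<delta> > 0"
  shows "\<exists>J. 1 / real d ^ J < \<delta>"
proof -
  have "\<exists>n. (1 / real d) ^ n < \<delta>" using assms by (intro real_arch_pow_inv) auto
  then show ?thesis by (auto simp: power_one_over)
qed

lemma image_cyl:
  assumes d2: "d \<ge> 2" and bij: "bij_betw g (boundary d k) (boundary d k)"
    and cont: "tcont_on d (boundary d k) (inv_into (boundary d k) g)"
    and p: "p \<in> boundary d k" and n: "n \<ge> 1" and m: "m \<ge> 1"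
    and hom: "\<forall>x\<in>cyl d k p n. \<forall>y\<in>cyl d k p n. tdist d (g x) (g y) = c * tdist d x y"
    and c: "c / real d ^ n = 1 / real d ^ m"
  shows "g ` cyl d k p n = cyl d k (g p) m"
proof -
  have dpos: "real d > 0" using d2 by auto
  have cpos: "c > 0"
  proof -
    have "c = real d ^ n / real d ^ m" using c dpos by (simp add: field_simps)
    then show ?thesis using dpos by simp
  qed
  have bdg: "g ` boundary d k = boundary d k" using bij by (simp add: bij_betw_def)
  have gin: "\<And>x. x \<in> boundary d k \<Longrightarrow> g x \<in> boundary d k" using bdg by blast
  have sub: "g ` cyl d k p n \<subseteq> cyl d k (g p) m"
  proof
    fix y assume "y \<in> g ` cyl d k p n"
    then obtain x where x: "x \<in> cyl d k p n" "y = g x" by blast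
    have pc: "p \<in> cyl d k p n" using p by (rule cyl_center)
    have "tdist d p x \<le> 1 / real d ^ n" using x(1) unfolding cyl_tdist[OF d2] by auto
    then have "c * tdist d p x \<le> c * (1 / real d ^ n)" using cpos by (rule mult_left_mono[OF _ less_imp_le])
    also have "\<dots> = 1 / real d ^ m" using c by simp
    finally have "tdist d (g p) y \<le> 1 / real d ^ m" using hom pc x by simp
    moreover have "y \<in> boundary d k" using x cyl_sub gin by blast
    ultimately show "y \<in> cyl d k (g p) m" unfolding cyl_tdist[OF d2] by simp
  qed
  have approx: "\<forall>y\<in>cyl d k (g p) m. \<exists>x\<in>cyl d k p n. \<forall>i<m+j. g x i = y i" for j
  proof -
    define T where "T = {t::nat list. set t \<subseteq> {..<d} \<and> length t = j}"
    define ext where "ext t = (\<lambda>i. if i < n then p i else if i - n < length t then t!(i-n) else 0)"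
      for t :: "nat list"
    have ext_in: "ext t \<in> cyl d k p n" if "t \<in> T" for t
    proof -
      have "ext t \<in> boundary d k"
        unfolding boundary_def
      proof (intro CollectI conjI allI impI)
        show "ext t 0 < k" using p n unfolding ext_def boundary_def by auto
        fix i :: nat assume "i \<ge> 1"
        then show "ext t i < d" using p that d2 unfolding ext_def boundary_def T_def
          by (auto dest!: nth_mem)
      qed
      then show ?thesis unfolding cyl_def ext_def by auto
    qed
    define \<Phi> where "\<Phi> t = map (\<lambda>i. g (ext t) (m+i)) [0..<j]" for t
    have finT: "finite T" unfolding T_def by (rule finite_lists_length_eq) auto
    have PhiT: "\<Phi> ` T \<subseteq> T"
    proof
      fix s assume "s \<in> \<Phi> ` T"
      then obtain t where t: "t \<in> T" "s = \<Phi> t" by blast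
      have "g (ext t) \<in> boundary d k" using ext_in[OF t(1)] cyl_sub gin by blast
      then have "g (ext t) (m+i) < d" for i using m unfolding boundary_def by auto
      then show "s \<in> T" unfolding t(2) T_def \<Phi>_def by auto
    qed
    have injT: "inj_on \<Phi> T"
    proof
      fix t1 t2 assume t1: "t1 \<in> T" and t2: "t2 \<in> T" and e: "\<Phi> t1 = \<Phi> t2"
      have g1: "g (ext t1) \<in> cyl d k (g p) m" and g2: "g (ext t2) \<in> cyl d k (g p) m"
        using sub ext_in t1 t2 by blast+
      have "\<forall>i<m+j. g (ext t1) i = g (ext t2) i"
      proof (intro allI impI)
        fix i assume i: "i < m + j"
        show "g (ext t1) i = g (ext t2) i"
        proof (cases "i < m")
          case True then show ?thesis using g1 g2 unfolding cyl_def by auto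
        next
          case False
          then have "\<Phi> t1 ! (i - m) = \<Phi> t2 ! (i - m)" using e by simp
          then show ?thesis using False i unfolding \<Phi>_def by auto
        qed
      qed
      then have "tdist d (g (ext t1)) (g (ext t2)) \<le> 1 / real d ^ (m+j)"
        using tdist_le_iff[OF d2] by blast
      moreover have "1 / real d ^ (m+j) = c / real d ^ (n+j)"
      proof -
        have "c / real d ^ (n+j) = (c / real d ^ n) / real d ^ j" by (simp add: power_add)
        also have "\<dots> = 1 / real d ^ (m+j)" using c by (simp add: power_add)
        finally show ?thesis by simp
      qed
      moreover have "tdist d (g (ext t1)) (g (ext t2)) = c * tdist d (ext t1) (ext t2)"
        using hom ext_in[OF t1] ext_in[OF t2] by blast
      ultimately have "c * tdist d (ext t1) (ext t2) \<le> c * (1 / real d ^ (n+j))"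
        by simp
      then have "tdist d (ext t1) (ext t2) \<le> 1 / real d ^ (n+j)" using cpos
        by (rule mult_left_le_imp_le)
      then have ag: "\<forall>i<n+j. ext t1 i = ext t2 i" using tdist_le_iff[OF d2] by blast
      show "t1 = t2"
      proof (rule nth_equalityI)
        show "length t1 = length t2" using t1 t2 unfolding T_def by simp
        fix i assume "i < length t1"
        then have "i < j" using t1 unfolding T_def by simp
        then have "ext t1 (n+i) = ext t2 (n+i)" using ag by simp
        then show "t1 ! i = t2 ! i" using \<open>i < j\<close> t1 t2 unfolding ext_def T_def by simp
      qed
    qed
    have surjT: "\<Phi> ` T = T" by (rule endo_inj_surj[OF finT PhiT injT])
    show ?thesis
    proof
      fix y assume y: "y \<in> cyl d k (g p) m"
      define ty where "ty = map (\<lambda>i. y (m+i)) [0..<j]"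
      have "y \<in> boundary d k" using y cyl_sub by blast
      then have "\<forall>i. y (m+i) < d" using m unfolding boundary_def by simp
      then have "ty \<in> T" unfolding ty_def T_def by auto
      then have "ty \<in> \<Phi> ` T" using surjT by simp
      then obtain t where t: "t \<in> T" "\<Phi> t = ty" by blast
      have "\<forall>i<m+j. g (ext t) i = y i"
      proof (intro allI impI)
        fix i assume i: "i < m + j"
        show "g (ext t) i = y i"
        proof (cases "i < m")
          case True
          have "g (ext t) \<in> cyl d k (g p) m" using sub ext_in[OF t(1)] by blast
          then show ?thesis using y True unfolding cyl_def by simp
        next
          case False
          have i2: "i - m < j" "m + (i - m) = i" using False i by auto
          have "\<Phi> t ! (i - m) = g (ext t) i" unfolding \<Phi>_def using i2 by simp
          moreover have "ty ! (i - m) = y i" unfolding ty_def using i2 by simp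
          ultimately show ?thesis using t(2) by simp
        qed
      qed
      then show "\<exists>x\<in>cyl d k p n. \<forall>i<m+j. g x i = y i" using ext_in[OF t(1)] by blast
    qed
  qed
  have sup: "cyl d k (g p) m \<subseteq> g ` cyl d k p n"
  proof
    fix y assume y: "y \<in> cyl d k (g p) m"
    show "y \<in> g ` cyl d k p n"
    proof (rule ccontr)
      assume ny: "y \<notin> g ` cyl d k p n"
      define u where "u = inv_into (boundary d k) g"
      have yb: "y \<in> boundary d k" using y cyl_sub by blast
      have yg: "y \<in> g ` boundary d k" using yb bdg by simp
      have x0: "u y \<in> boundary d k" "g (u y) = y"
        unfolding u_def by (rule inv_into_into[OF yg], rule f_inv_into_f[OF yg])
      have x0n: "u y \<notin> cyl d k p n"
      proof
        assume "u y \<in> cyl d k p n"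
        then have "g (u y) \<in> g ` cyl d k p n" by (rule imageI)
        then show False using ny x0(2) by simp
      qed
      obtain \<delta> where \<delta>: "\<delta> > 0" "\<forall>z\<in>boundary d k. tdist d y z < \<delta> \<longrightarrow> tdist d (u y) (u z) < 1 / real d ^ n"
      proof -
        have e: "1 / real d ^ n > 0" using dpos by simp
        have "\<forall>e>0. \<exists>\<delta>>0. \<forall>z\<in>boundary d k. tdist d y z < \<delta> \<longrightarrow> tdist d (u y) (u z) < e"
          using cont yb unfolding tcont_on_def u_def by blast
        then show ?thesis using e that by blast
      qed
      obtain J where J: "1 / real d ^ J < \<delta>" using arch_inv_pow[OF d2 \<delta>(1)] by blast
      obtain x where x: "x \<in> cyl d k p n" "\<forall>i<m+J. g x i = y i" using approx y by blast
      have "tdist d y (g x) \<le> 1 / real d ^ (m+J)" using x(2) tdist_le_iff[OF d2] by auto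
      also have "\<dots> \<le> 1 / real d ^ J" using inv_pow_le_iff[OF d2] by simp
      finally have "tdist d y (g x) < \<delta>" using J by simp
      moreover have xb: "x \<in> boundary d k" using x cyl_sub by blast
      ultimately have "tdist d (u y) (u (g x)) < 1 / real d ^ n" using \<delta> gin by blast
      moreover have "u (g x) = x" unfolding u_def using bij xb
        by (simp add: bij_betw_def inv_into_f_f)
      ultimately have "\<forall>i<Suc n. u y i = x i" using tdist_lt_iff[OF d2] by simp
      then have "u y \<in> cyl d k p n" using x(1) x0(1) unfolding cyl_def by auto
      then show False using x0n by blast
    qed
  qed
  show ?thesis using sub sup by blast
qed

lemma hom_const:
  assumes d2: "d \<ge> 2" and p: "p \<in> boundary d k" and n: "n \<ge> 1"
    and inj: "inj_on g (cyl d k p n)"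
    and hom: "\<forall>x\<in>cyl d k p n. \<forall>y\<in>cyl d k p n. tdist d (g x) (g y) = c * tdist d x y"
  shows "\<exists>m. c / real d ^ n = 1 / real d ^ m"
proof -
  define x1 where "x1 = p(n := (if p n = 0 then 1 else 0))"
  have x1b: "x1 \<in> boundary d k" using p n d2 unfolding x1_def boundary_def by auto
  have x1c: "x1 \<in> cyl d k p n" using x1b unfolding cyl_def x1_def by auto
  have pc: "p \<in> cyl d k p n" using p by (rule cyl_center)
  have le: "tdist d p x1 \<le> 1 / real d ^ n" using x1c unfolding cyl_tdist[OF d2] by auto
  have "\<not> (\<forall>i<Suc n. p i = x1 i)" unfolding x1_def by auto
  then have "\<not> tdist d p x1 < 1 / real d ^ n" using tdist_lt_iff[OF d2] by blast
  then have eq: "tdist d p x1 = 1 / real d ^ n" using le by simp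
  have "p \<noteq> x1" unfolding x1_def by (auto dest: fun_cong[of _ _ n])
  then have "g p \<noteq> g x1" using inj pc x1c by (auto dest: inj_onD)
  then obtain N where "tdist d (g p) (g x1) = 1 / real d ^ N" using tdist_disc by blast
  then show ?thesis using hom pc x1c eq by auto
qed



definition ext :: "ray \<Rightarrow> nat \<Rightarrow> nat list \<Rightarrow> ray" where
  "ext p n w = (\<lambda>i. if i < n then p i else if i - n < length w then w!(i-n) else 0)"

definition words :: "nat \<Rightarrow> nat \<Rightarrow> nat list set" where
  "words d t = {w. set w \<subseteq> {..<d} \<and> length w = t}"

lemma finite_words: "finite (words d t)"
  unfolding words_def by (rule finite_lists_length_eq) auto

lemma ext_in_cyl:
  assumes "d \<ge> 2" "p \<in> boundary d k" "n \<ge> 1" "w \<in> words d t"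
  shows "ext p n w \<in> cyl d k p n"
proof -
  have "ext p n w \<in> boundary d k"
    unfolding boundary_def
  proof (intro CollectI conjI allI impI)
    show "ext p n w 0 < k" using assms unfolding ext_def boundary_def by auto
    fix i :: nat assume i: "i \<ge> 1"
    show "ext p n w i < d"
    proof (cases "i < n")
      case True then show ?thesis using assms i unfolding ext_def boundary_def by auto
    next
      case False
      show ?thesis
      proof (cases "i - n < length w")
        case True
        then have "w ! (i-n) \<in> set w" by (rule nth_mem)
        moreover have "set w \<subseteq> {..<d}" using assms(4) unfolding words_def by simp
        ultimately have "w ! (i-n) < d" by auto
        then show ?thesis using False True unfolding ext_def by simp
      next
        case False2: False
        then show ?thesis using False assms(1) unfolding ext_def by auto
      qed
    qed
  qed
  then show ?thesis unfolding cyl_def ext_def by auto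
qed

lemma in_sub_cyl1:
  assumes "x \<in> cyl d k p n"
  shows "x \<in> cyl d k (ext p n (map (\<lambda>i. x (n+i)) [0..<t])) (n+t)"
  using assms unfolding cyl_def ext_def by auto

lemma in_sub_cyl2:
  assumes "x \<in> cyl d k p n" "n \<ge> 1"
  shows "map (\<lambda>i. x (n+i)) [0..<t] \<in> words d t"
proof -
  have "x \<in> boundary d k" using assms cyl_sub by blast
  then have "\<forall>i. x (n+i) < d" using assms(2) unfolding boundary_def by simp
  then show ?thesis unfolding words_def by auto
qed

lemma refine:
  assumes d2: "d \<ge> 2" and g: "almost_aut d k g"
  shows "\<exists>P'. finite P' \<and> \<Union>P' = boundary d k \<and> (\<forall>D1\<in>P'. \<forall>D2\<in>P'. D1 \<noteq> D2 \<longrightarrow> D1 \<inter> D2 = {}) \<and>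
        (\<forall>D\<in>P'. \<exists>q\<in>boundary d k. \<exists>n\<ge>1. \<exists>m\<ge>L. \<exists>c>0. D = cyl d k q n \<and> g ` D = cyl d k (g q) m \<and>
            (\<forall>x\<in>D. \<forall>y\<in>D. tdist d (g x) (g y) = c * tdist d x y))"
proof -
  obtain P where P: "finite P" "\<forall>B\<in>P. proper_ball d k B"
      "\<forall>B1\<in>P. \<forall>B2\<in>P. B1 \<noteq> B2 \<longrightarrow> B1 \<inter> B2 = {}" "\<Union>P = boundary d k" "\<forall>B\<in>P. homothety_on d B g"
    using g unfolding almost_aut_def by blast
  have bij: "bij_betw g (boundary d k) (boundary d k)" using g by (rule aa_bij)
  have cont: "tcont_on d (boundary d k) (inv_into (boundary d k) g)" using g by (rule aa_inv_cont)
  have "\<forall>C\<in>P. \<exists>pn. fst pn \<in> boundary d k \<and> snd pn \<ge> 1 \<and> C = cyl d k (fst pn) (snd pn)"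
  proof
    fix C assume "C \<in> P"
    then obtain p n where "p \<in> boundary d k" "n \<ge> 1" "C = cyl d k p n"
      using proper_ball_cyl[OF d2] P(2) by blast
    then show "\<exists>pn. fst pn \<in> boundary d k \<and> snd pn \<ge> 1 \<and> C = cyl d k (fst pn) (snd pn)"
      by (intro exI[of _ "(p,n)"]) simp
  qed
  from bchoice[OF this] obtain pn where pn: "\<forall>C\<in>P. fst (pn C) \<in> boundary d k \<and> snd (pn C) \<ge> 1 \<and> C = cyl d k (fst (pn C)) (snd (pn C))"
    by blast
  have "\<forall>C\<in>P. \<exists>c. c > 0 \<and> (\<forall>x\<in>C. \<forall>y\<in>C. tdist d (g x) (g y) = c * tdist d x y)"
    using P(5) unfolding homothety_on_def by blast
  from bchoice[OF this] obtain cc where cc: "\<forall>C\<in>P. cc C > 0 \<and> (\<forall>x\<in>C. \<forall>y\<in>C. tdist d (g x) (g y) = cc C * tdist d x y)"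
    by blast
  define t where "t = L + 1"
  define sub where "sub C w = cyl d k (ext (fst (pn C)) (snd (pn C)) w) (snd (pn C) + t)" for C w
  define P' where "P' = (\<Union>C\<in>P. sub C ` words d t)"
  have fin: "finite P'" unfolding P'_def using P(1) finite_words by auto
  have subC: "sub C w \<subseteq> C" and subq: "ext (fst (pn C)) (snd (pn C)) w \<in> C"
    if "C \<in> P" "w \<in> words d t" for C w
  proof -
    have q: "ext (fst (pn C)) (snd (pn C)) w \<in> cyl d k (fst (pn C)) (snd (pn C))"
      using ext_in_cyl[OF d2, of "fst (pn C)" k "snd (pn C)" w t] pn that by blast
    then show "ext (fst (pn C)) (snd (pn C)) w \<in> C" using pn that by auto
    have "sub C w \<subseteq> cyl d k (ext (fst (pn C)) (snd (pn C)) w) (snd (pn C))"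
      unfolding sub_def by (rule cyl_mono) simp
    also have "\<dots> = cyl d k (fst (pn C)) (snd (pn C))" using q by (rule cyl_recenter)
    finally show "sub C w \<subseteq> C" using pn that by auto
  qed
  have union: "\<Union>P' = boundary d k"
  proof
    show "\<Union>P' \<subseteq> boundary d k" using subC P(4) unfolding P'_def by blast
  next
    show "boundary d k \<subseteq> \<Union>P'"
    proof
      fix x assume "x \<in> boundary d k"
      then obtain C where C: "C \<in> P" "x \<in> C" using P(4) by blast
      let ?p = "fst (pn C)" and ?n = "snd (pn C)"
      have xc: "x \<in> cyl d k ?p ?n" using C pn by auto
      have n1: "?n \<ge> 1" using C pn by auto
      define w where "w = map (\<lambda>i. x (?n+i)) [0..<t]"
      have "w \<in> words d t" unfolding w_def using in_sub_cyl2[OF xc n1] .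
      moreover have "x \<in> sub C w" unfolding sub_def w_def using in_sub_cyl1[OF xc] .
      ultimately show "x \<in> \<Union>P'" unfolding P'_def using C(1) by blast
    qed
  qed
  have disj: "\<forall>D1\<in>P'. \<forall>D2\<in>P'. D1 \<noteq> D2 \<longrightarrow> D1 \<inter> D2 = {}"
  proof (intro ballI impI)
    fix D1 D2 assume D1: "D1 \<in> P'" and D2: "D2 \<in> P'" and ne: "D1 \<noteq> D2"
    obtain C1 w1 where C1: "C1 \<in> P" "w1 \<in> words d t" "D1 = sub C1 w1" using D1 unfolding P'_def by blast
    obtain C2 w2 where C2: "C2 \<in> P" "w2 \<in> words d t" "D2 = sub C2 w2" using D2 unfolding P'_def by blast
    show "D1 \<inter> D2 = {}"
    proof (rule ccontr)
      assume "D1 \<inter> D2 \<noteq> {}"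
      then obtain x where x: "x \<in> D1" "x \<in> D2" by blast
      have "x \<in> C1" "x \<in> C2" using x subC C1 C2 by blast+
      then have "C1 = C2" using P(3) C1(1) C2(1) by blast
      have "D1 = cyl d k x (snd (pn C1) + t)" using x(1) C1(3) unfolding sub_def
        by (simp add: cyl_recenter)
      moreover have "D2 = cyl d k x (snd (pn C2) + t)" using x(2) C2(3) unfolding sub_def
        by (simp add: cyl_recenter)
      ultimately show False using ne \<open>C1 = C2\<close> by simp
    qed
  qed
  have props: "\<forall>D\<in>P'. \<exists>q\<in>boundary d k. \<exists>n\<ge>1. \<exists>m\<ge>L. \<exists>c>0. D = cyl d k q n \<and> g ` D = cyl d k (g q) m \<and>
            (\<forall>x\<in>D. \<forall>y\<in>D. tdist d (g x) (g y) = c * tdist d x y)"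
  proof
    fix D assume "D \<in> P'"
    then obtain C w where C: "C \<in> P" "w \<in> words d t" "D = sub C w" unfolding P'_def by blast
    let ?p = "fst (pn C)" and ?n = "snd (pn C)"
    define q where "q = ext ?p ?n w"
    have pb: "?p \<in> boundary d k" and n1: "?n \<ge> 1" and Ceq: "C = cyl d k ?p ?n" using C pn by auto
    have qC: "q \<in> C" unfolding q_def using subq C by blast
    have qb: "q \<in> boundary d k" using qC Ceq cyl_sub by blast
    have homC: "\<forall>x\<in>C. \<forall>y\<in>C. tdist d (g x) (g y) = cc C * tdist d x y" and cpos: "cc C > 0" using cc C by auto
    have injC: "inj_on g C" using bij Ceq cyl_sub unfolding bij_betw_def by (metis inj_on_subset)
    obtain m0 where m0: "cc C / real d ^ ?n = 1 / real d ^ m0"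
      using hom_const[OF d2 pb n1, of g "cc C"] injC homC Ceq by auto
    have DC: "D \<subseteq> C" using subC C by blast
    have Deq: "D = cyl d k q (?n + t)" unfolding C(3) sub_def q_def ..
    have homD: "\<forall>x\<in>D. \<forall>y\<in>D. tdist d (g x) (g y) = cc C * tdist d x y" using homC DC by blast
    have ceq: "cc C / real d ^ (?n + t) = 1 / real d ^ (m0 + t)"
    proof -
      have "cc C / real d ^ (?n + t) = (cc C / real d ^ ?n) / real d ^ t" by (simp add: power_add)
      also have "\<dots> = 1 / real d ^ (m0 + t)" using m0 by (simp add: power_add)
      finally show ?thesis .
    qed
    have img: "g ` D = cyl d k (g q) (m0 + t)"
      unfolding Deq
      by (rule image_cyl[OF d2 bij cont qb _ _ _ ceq]) (use n1 t_def homD Deq in auto)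
    show "\<exists>q\<in>boundary d k. \<exists>n\<ge>1. \<exists>m\<ge>L. \<exists>c>0. D = cyl d k q n \<and> g ` D = cyl d k (g q) m \<and>
            (\<forall>x\<in>D. \<forall>y\<in>D. tdist d (g x) (g y) = c * tdist d x y)"
      using qb n1 cpos Deq img homD unfolding t_def
      by (intro bexI[OF _ qb] exI[of _ "?n + t"] exI[of _ "m0 + t"] exI[of _ "cc C"] conjI) (auto simp: t_def)
  qed
  show ?thesis using fin union disj props by blast
qed



lemma tcont_cong: "tcont_on d S f \<Longrightarrow> (\<And>x. x \<in> S \<Longrightarrow> f' x = f x) \<Longrightarrow> tcont_on d S f'"
  unfolding tcont_on_def by simp

lemma tcont_comp:
  assumes "tcont_on d S f" "tcont_on d S g" "f ` S \<subseteq> S"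
  shows "tcont_on d S (g \<circ> f)"
  unfolding tcont_on_def
proof (intro ballI allI impI)
  fix x e assume x: "x \<in> S" and e: "(e::real) > 0"
  obtain \<delta>1 where d1: "\<delta>1 > 0" "\<forall>y\<in>S. tdist d (f x) y < \<delta>1 \<longrightarrow> tdist d (g (f x)) (g y) < e"
    using assms(2) x e assms(3) unfolding tcont_on_def by blast
  obtain \<delta> where d: "\<delta> > 0" "\<forall>y\<in>S. tdist d x y < \<delta> \<longrightarrow> tdist d (f x) (f y) < \<delta>1"
    using assms(1) x d1(1) unfolding tcont_on_def by blast
  show "\<exists>\<delta>>0. \<forall>y\<in>S. tdist d x y < \<delta> \<longrightarrow> tdist d ((g \<circ> f) x) ((g \<circ> f) y) < e"
  proof (intro exI[of _ \<delta>] conjI ballI impI)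
    fix y assume y: "y \<in> S" "tdist d x y < \<delta>"
    then have "tdist d (f x) (f y) < \<delta>1" using d by blast
    moreover have "f y \<in> S" using y assms(3) by blast
    ultimately show "tdist d ((g \<circ> f) x) ((g \<circ> f) y) < e" using d1 by simp
  qed (use d in simp)
qed

lemma tcont_id: "tcont_on d S id"
  unfolding tcont_on_def by auto

lemma aa_id:
  assumes d2: "d \<ge> 2" and k2: "k \<ge> 2"
  shows "almost_aut d k id"
proof -
  define P where "P = (\<lambda>a. cyl d k (\<lambda>i. if i = 0 then a else 0) 1) ` {..<k}"
  have pb: "(\<lambda>i. if i = 0 then a else 0) \<in> boundary d k" if "a < k" for a
    using that d2 unfolding boundary_def by auto
  have "finite P" unfolding P_def by simp
  moreover have "\<forall>B\<in>P. proper_ball d k B" unfolding P_def using cyl_proper_ball[OF d2 k2] pb by auto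
  moreover have "\<forall>B1\<in>P. \<forall>B2\<in>P. B1 \<noteq> B2 \<longrightarrow> B1 \<inter> B2 = {}"
    unfolding P_def cyl_def by auto
  moreover have "\<Union>P = boundary d k"
  proof
    show "\<Union>P \<subseteq> boundary d k" unfolding P_def cyl_def by auto
    show "boundary d k \<subseteq> \<Union>P"
    proof
      fix x assume x: "x \<in> boundary d k"
      then have "x 0 < k" unfolding boundary_def by simp
      moreover have "x \<in> cyl d k (\<lambda>i. if i = 0 then x 0 else 0) 1" using x unfolding cyl_def by auto
      ultimately show "x \<in> \<Union>P" unfolding P_def by blast
    qed
  qed
  moreover have "\<forall>B\<in>P. homothety_on d B id" unfolding homothety_on_def by (auto intro: exI[of _ 1])
  moreover have "homeomorphism_bd d k id"
  proof -
    have "inv_into (boundary d k) id x = x" if "x \<in> boundary d k" for x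
      using that by (simp add: inv_into_f_eq)
    then show ?thesis unfolding homeomorphism_bd_def
      using tcont_id tcont_cong[OF tcont_id[of d "boundary d k"]] by auto
  qed
  ultimately show ?thesis unfolding almost_aut_def by auto
qed

definition finv :: "nat \<Rightarrow> nat \<Rightarrow> (ray \<Rightarrow> ray) \<Rightarrow> ray \<Rightarrow> ray" where
  "finv d k g = (\<lambda>x. if x \<in> boundary d k then inv_into (boundary d k) g x else x)"

lemma aa_inv:
  assumes d2: "d \<ge> 2" and k2: "k \<ge> 2" and g: "almost_aut d k g"
  shows "almost_aut d k (finv d k g)"
proof -
  let ?bd = "boundary d k"
  let ?u = "finv d k g"
  have bij: "bij_betw g ?bd ?bd" using g by (rule aa_bij)
  have inj: "inj_on g ?bd" using bij by (simp add: bij_betw_def)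
  have img: "g ` ?bd = ?bd" using bij by (simp add: bij_betw_def)
  have ug: "?u (g x) = x" if "x \<in> ?bd" for x
  proof -
    have "g x \<in> ?bd" using that img by blast
    then show ?thesis unfolding finv_def using inv_into_f_f[OF inj that] by simp
  qed
  have ubij: "bij_betw ?u ?bd ?bd"
  proof -
    have "bij_betw (inv_into ?bd g) ?bd ?bd" using bij_betw_inv_into[OF bij] .
    then show ?thesis using bij_betw_cong[of ?bd ?u "inv_into ?bd g" ?bd] unfolding finv_def by simp
  qed
  have ucont: "tcont_on d ?bd ?u"
    by (rule tcont_cong[OF aa_inv_cont[OF g]]) (simp add: finv_def)
  have uinv: "inv_into ?bd ?u x = g x" if "x \<in> ?bd" for x
  proof (rule inv_into_f_eq)
    show "inj_on ?u ?bd" using ubij by (simp add: bij_betw_def)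
    show "g x \<in> ?bd" using that img by blast
    show "?u (g x) = x" using ug[OF that] .
  qed
  have uicont: "tcont_on d ?bd (inv_into ?bd ?u)"
    by (rule tcont_cong[OF aa_cont[OF g]]) (use uinv in simp)
  have out: "\<forall>x. x \<notin> ?bd \<longrightarrow> ?u x = x" unfolding finv_def by simp
  from refine[OF d2 g, of 1] obtain P' where P'': "finite P' \<and> \<Union>P' = ?bd \<and> (\<forall>D1\<in>P'. \<forall>D2\<in>P'. D1 \<noteq> D2 \<longrightarrow> D1 \<inter> D2 = {}) \<and>
     (\<forall>D\<in>P'. \<exists>q\<in>?bd. \<exists>n\<ge>1. \<exists>m\<ge>1. \<exists>c>0. D = cyl d k q n \<and> g ` D = cyl d k (g q) m \<and>
            (\<forall>x\<in>D. \<forall>y\<in>D. tdist d (g x) (g y) = c * tdist d x y))" ..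
  note P' = conjunct1[OF P''] conjunct1[OF conjunct2[OF P'']] conjunct1[OF conjunct2[OF conjunct2[OF P'']]]
    conjunct2[OF conjunct2[OF conjunct2[OF P'']]]
  have Psub: "D \<subseteq> ?bd" if "D \<in> P'" for D using P'(2) that by blast
  define Q where "Q = (\<lambda>D. g ` D) ` P'"
  have "finite Q" unfolding Q_def using P'(1) by simp
  moreover have "\<forall>B\<in>Q. proper_ball d k B"
  proof
    fix B assume "B \<in> Q"
    then obtain D where D: "D \<in> P'" "B = g ` D" unfolding Q_def by blast
    from P'(4)[rule_format, OF D(1)] obtain q m where qm: "q \<in> ?bd" "m \<ge> 1" "g ` D = cyl d k (g q) m"
      by blast
    have "g q \<in> ?bd" using qm(1) img by blast
    then show "proper_ball d k B" using cyl_proper_ball[OF d2 k2 _ qm(2)] D(2) qm(3) by simp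
  qed
  moreover have "\<forall>B1\<in>Q. \<forall>B2\<in>Q. B1 \<noteq> B2 \<longrightarrow> B1 \<inter> B2 = {}"
  proof (intro ballI impI)
    fix B1 B2 assume "B1 \<in> Q" "B2 \<in> Q" "B1 \<noteq> B2"
    then obtain D1 D2 where D: "D1 \<in> P'" "D2 \<in> P'" "B1 = g ` D1" "B2 = g ` D2" unfolding Q_def by blast
    then have "D1 \<noteq> D2" using \<open>B1 \<noteq> B2\<close> by blast
    then have "D1 \<inter> D2 = {}" using P'(3) D by blast
    then have "g ` (D1 \<inter> D2) = {}" by simp
    moreover have "g ` (D1 \<inter> D2) = g ` D1 \<inter> g ` D2" using inj_on_image_Int[OF inj Psub[OF D(1)] Psub[OF D(2)]] .
    ultimately show "B1 \<inter> B2 = {}" using D by simp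
  qed
  moreover have "\<Union>Q = ?bd"
  proof -
    have "\<Union>Q = g ` \<Union>P'" unfolding Q_def by (simp add: image_Union)
    then show ?thesis using P'(2) img by simp
  qed
  moreover have "\<forall>B\<in>Q. homothety_on d B ?u"
  proof
    fix B assume "B \<in> Q"
    then obtain D where D: "D \<in> P'" "B = g ` D" unfolding Q_def by blast
    from P'(4)[rule_format, OF D(1)] obtain c where c: "c > 0" "\<forall>x\<in>D. \<forall>y\<in>D. tdist d (g x) (g y) = c * tdist d x y"
      by blast
    show "homothety_on d B ?u" unfolding homothety_on_def
    proof (intro exI[of _ "1/c"] conjI ballI)
      show "1 / c > 0" using c by simp
      fix y1 y2 assume "y1 \<in> B" "y2 \<in> B"
      then obtain x1 x2 where x: "x1 \<in> D" "x2 \<in> D" "y1 = g x1" "y2 = g x2" using D by blast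
      have "?u y1 = x1" "?u y2 = x2" using x ug Psub[OF D(1)] by auto
      then show "tdist d (?u y1) (?u y2) = 1 / c * tdist d y1 y2" using x c by simp
    qed
  qed
  ultimately show ?thesis unfolding almost_aut_def homeomorphism_bd_def
    using ubij ucont uicont out by blast
qed



lemma aa_uniform:
  assumes d2: "d \<ge> 2" and g: "almost_aut d k g"
  shows "\<exists>L. \<forall>x\<in>boundary d k. \<exists>c>0. \<forall>y\<in>cyl d k x L. \<forall>z\<in>cyl d k x L. tdist d (g y) (g z) = c * tdist d y z"
proof -
  obtain P where P: "finite P" "\<forall>B\<in>P. proper_ball d k B"
      "\<Union>P = boundary d k" "\<forall>B\<in>P. homothety_on d B g"
    using g unfolding almost_aut_def by blast
  have "\<forall>C\<in>P. \<exists>n. \<exists>p\<in>boundary d k. C = cyl d k p n"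
  proof
    fix C assume "C \<in> P"
    then obtain p n where "p \<in> boundary d k" "C = cyl d k p n"
      using proper_ball_cyl[OF d2] P(2) by blast
    then show "\<exists>n. \<exists>p\<in>boundary d k. C = cyl d k p n" by blast
  qed
  from bchoice[OF this] obtain nn where nn: "\<forall>C\<in>P. \<exists>p\<in>boundary d k. C = cyl d k p (nn C)" by blast
  define L where "L = Max (nn ` P)"
  show ?thesis
  proof (intro exI[of _ L] ballI)
    fix x assume x: "x \<in> boundary d k"
    then obtain C where C: "C \<in> P" "x \<in> C" using P(3) by blast
    obtain p where p: "C = cyl d k p (nn C)" using nn C(1) by blast
    have "nn C \<le> L" unfolding L_def using P(1) C(1) by simp
    then have "cyl d k x L \<subseteq> cyl d k x (nn C)" by (rule cyl_mono)
    also have "\<dots> = C" using C(2) p cyl_recenter by metis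
    finally have sub: "cyl d k x L \<subseteq> C" .
    obtain c where "c > 0" "\<forall>y\<in>C. \<forall>z\<in>C. tdist d (g y) (g z) = c * tdist d y z"
      using P(4) C(1) unfolding homothety_on_def by blast
    then show "\<exists>c>0. \<forall>y\<in>cyl d k x L. \<forall>z\<in>cyl d k x L. tdist d (g y) (g z) = c * tdist d y z"
      using sub by blast
  qed
qed

lemma inv_into_comp_bd:
  assumes "bij_betw g A A" "bij_betw h A A" "x \<in> A"
  shows "inv_into A (g \<circ> h) x = inv_into A h (inv_into A g x)"
proof (rule inv_into_f_eq)
  show "inj_on (g \<circ> h) A" using bij_betw_trans[OF assms(2) assms(1)] by (simp add: bij_betw_def)
  have gA: "g ` A = A" and hA: "h ` A = A" using assms by (auto simp: bij_betw_def)
  have "inv_into A g x \<in> A" using assms(3) gA by (metis inv_into_into)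
  then show "inv_into A h (inv_into A g x) \<in> A" using hA by (metis inv_into_into)
  have "h (inv_into A h (inv_into A g x)) = inv_into A g x"
    using \<open>inv_into A g x \<in> A\<close> hA by (metis f_inv_into_f)
  then show "(g \<circ> h) (inv_into A h (inv_into A g x)) = x"
    using assms(3) gA by (simp add: f_inv_into_f)
qed

lemma aa_comp:
  assumes d2: "d \<ge> 2" and k2: "k \<ge> 2" and g: "almost_aut d k g" and h: "almost_aut d k h"
  shows "almost_aut d k (g \<circ> h)"
proof -
  let ?bd = "boundary d k"
  have bg: "bij_betw g ?bd ?bd" and bh: "bij_betw h ?bd ?bd" using g h by (simp_all add: aa_bij)
  have hA: "h ` ?bd = ?bd" and gA: "g ` ?bd = ?bd" using bg bh by (auto simp: bij_betw_def)
  have bij: "bij_betw (g \<circ> h) ?bd ?bd" by (rule bij_betw_trans[OF bh bg])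
  have cont: "tcont_on d ?bd (g \<circ> h)" by (rule tcont_comp[OF aa_cont[OF h] aa_cont[OF g]]) (use hA in simp)
  have icont: "tcont_on d ?bd (inv_into ?bd (g \<circ> h))"
  proof (rule tcont_cong)
    show "tcont_on d ?bd (inv_into ?bd h \<circ> inv_into ?bd g)"
    proof (rule tcont_comp[OF aa_inv_cont[OF g] aa_inv_cont[OF h]])
      show "inv_into ?bd g ` ?bd \<subseteq> ?bd" using gA by (auto intro: inv_into_into)
    qed
    fix x assume "x \<in> ?bd"
    then show "inv_into ?bd (g \<circ> h) x = (inv_into ?bd h \<circ> inv_into ?bd g) x"
      using inv_into_comp_bd[OF bg bh] by simp
  qed
  have out: "\<forall>x. x \<notin> ?bd \<longrightarrow> (g \<circ> h) x = x" using aa_out[OF g] aa_out[OF h] by simp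
  obtain L where L: "\<forall>x\<in>?bd. \<exists>c>0. \<forall>y\<in>cyl d k x L. \<forall>z\<in>cyl d k x L. tdist d (g y) (g z) = c * tdist d y z"
    using aa_uniform[OF d2 g] by blast
  from refine[OF d2 h, of L] obtain P' where P'': "finite P' \<and> \<Union>P' = ?bd \<and> (\<forall>D1\<in>P'. \<forall>D2\<in>P'. D1 \<noteq> D2 \<longrightarrow> D1 \<inter> D2 = {}) \<and>
     (\<forall>D\<in>P'. \<exists>q\<in>?bd. \<exists>n\<ge>1. \<exists>m\<ge>L. \<exists>c>0. D = cyl d k q n \<and> h ` D = cyl d k (h q) m \<and>
            (\<forall>x\<in>D. \<forall>y\<in>D. tdist d (h x) (h y) = c * tdist d x y))" ..
  note P' = conjunct1[OF P''] conjunct1[OF conjunct2[OF P'']] conjunct1[OF conjunct2[OF conjunct2[OF P'']]]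
    conjunct2[OF conjunct2[OF conjunct2[OF P'']]]
  have pb: "\<forall>B\<in>P'. proper_ball d k B"
  proof
    fix D assume D: "D \<in> P'"
    from P'(4)[rule_format, OF D] obtain q n where "q \<in> ?bd" "n \<ge> 1" "D = cyl d k q n" by blast
    then show "proper_ball d k D" using cyl_proper_ball[OF d2 k2] by simp
  qed
  have hom: "\<forall>B\<in>P'. homothety_on d B (g \<circ> h)"
  proof
    fix D assume D: "D \<in> P'"
    from P'(4)[rule_format, OF D] obtain q m c where qm: "q \<in> ?bd" "m \<ge> L" "c > 0" "h ` D = cyl d k (h q) m"
      "\<forall>x\<in>D. \<forall>y\<in>D. tdist d (h x) (h y) = c * tdist d x y" by blast
    have "h q \<in> ?bd" using qm(1) hA by blast
    then obtain c' where c': "c' > 0" "\<forall>y\<in>cyl d k (h q) L. \<forall>z\<in>cyl d k (h q) L. tdist d (g y) (g z) = c' * tdist d y z"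
      using L by blast
    have sub: "h ` D \<subseteq> cyl d k (h q) L" using qm(2,4) cyl_mono by blast
    show "homothety_on d D (g \<circ> h)" unfolding homothety_on_def
    proof (intro exI[of _ "c' * c"] conjI ballI)
      show "c' * c > 0" using c' qm by simp
      fix x y assume xy: "x \<in> D" "y \<in> D"
      have "h x \<in> cyl d k (h q) L" "h y \<in> cyl d k (h q) L" using sub xy by blast+
      then have "tdist d (g (h x)) (g (h y)) = c' * tdist d (h x) (h y)" using c' by blast
      also have "\<dots> = c' * c * tdist d x y" using qm(5) xy by simp
      finally show "tdist d ((g \<circ> h) x) ((g \<circ> h) y) = c' * c * tdist d x y" by simp
    qed
  qed
  show ?thesis unfolding almost_aut_def homeomorphism_bd_def
    using bij cont icont out P'(1,2,3) pb hom by blast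
qed

lemma AAut_group:
  assumes d2: "d \<ge> 2" and k2: "k \<ge> 2"
  shows "group (AAut d k)"
proof (rule groupI)
  fix x y assume "x \<in> carrier (AAut d k)" "y \<in> carrier (AAut d k)"
  then show "x \<otimes>\<^bsub>AAut d k\<^esub> y \<in> carrier (AAut d k)"
    using aa_comp[OF d2 k2] by (simp add: AAut_def)
next
  show "\<one>\<^bsub>AAut d k\<^esub> \<in> carrier (AAut d k)" using aa_id[OF d2 k2] by (simp add: AAut_def)
next
  fix x y z show "x \<otimes>\<^bsub>AAut d k\<^esub> y \<otimes>\<^bsub>AAut d k\<^esub> z = x \<otimes>\<^bsub>AAut d k\<^esub> (y \<otimes>\<^bsub>AAut d k\<^esub> z)"
    by (simp add: AAut_def comp_assoc)
next
  fix x show "\<one>\<^bsub>AAut d k\<^esub> \<otimes>\<^bsub>AAut d k\<^esub> x = x" by (simp add: AAut_def)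
next
  fix x assume x: "x \<in> carrier (AAut d k)"
  then have g: "almost_aut d k x" by (simp add: AAut_def)
  have "finv d k x \<circ> x = id"
  proof
    fix y
    show "(finv d k x \<circ> x) y = id y"
    proof (cases "y \<in> boundary d k")
      case True
      have bij: "bij_betw x (boundary d k) (boundary d k)" using g by (rule aa_bij)
      then have "x y \<in> boundary d k" using True by (auto simp: bij_betw_def)
      then show ?thesis using True bij unfolding finv_def by (simp add: bij_betw_def inv_into_f_f)
    next
      case False
      then show ?thesis using aa_out[OF g False] unfolding finv_def by simp
    qed
  qed
  then show "\<exists>y\<in>carrier (AAut d k). y \<otimes>\<^bsub>AAut d k\<^esub> x = \<one>\<^bsub>AAut d k\<^esub>"
    using aa_inv[OF d2 k2 g] by (intro bexI[of _ "finv d k x"]) (simp_all add: AAut_def)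
qed

lemma AAut_simps: "x \<otimes>\<^bsub>AAut d k\<^esub> y = x \<circ> y" "\<one>\<^bsub>AAut d k\<^esub> = id"
  by (simp_all add: AAut_def)



lemma exists_far:
  assumes d2: "d \<ge> 2" and p: "p \<in> boundary d k" and n: "n \<ge> 1"
  shows "\<exists>x1\<in>cyl d k p n. tdist d p x1 = 1 / real d ^ n"
proof -
  define x1 where "x1 = p(n := (if p n = 0 then 1 else 0))"
  have x1b: "x1 \<in> boundary d k" using p n d2 unfolding x1_def boundary_def by auto
  have x1c: "x1 \<in> cyl d k p n" using x1b unfolding cyl_def x1_def by auto
  have le: "tdist d p x1 \<le> 1 / real d ^ n" using x1c unfolding cyl_tdist[OF d2] by auto
  have "\<not> (\<forall>i<Suc n. p i = x1 i)" unfolding x1_def by auto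
  then have "\<not> tdist d p x1 < 1 / real d ^ n" using tdist_lt_iff[OF d2] by blast
  then have eq: "tdist d p x1 = 1 / real d ^ n" using le by simp
  then show ?thesis using x1c by blast
qed

lemma pow_funpow: "x [^]\<^bsub>AAut d k\<^esub> (j::nat) = x ^^ j"
  by (induction j) (simp_all add: AAut_simps funpow_Suc_right del: funpow.simps(2))

lemma translation_ball:
  assumes d2: "d \<ge> 2" and k2: "k \<ge> 2" and tr: "translation d k h"
  shows "\<exists>f C. f \<in> carrier (AAut d k) \<and> (\<exists>n::int. f = h [^]\<^bsub>AAut d k\<^esub> n) \<and> proper_ball d k C \<and>
            (\<forall>j\<ge>1. (f ^^ j) ` C \<inter> C = {})"
proof -
  interpret G: group "AAut d k" by (rule AAut_group[OF d2 k2])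
  let ?bd = "boundary d k"
  obtain B and n :: int where hc: "h \<in> carrier (AAut d k)" and B: "is_ball d k B"
    and hom: "homothety_on d B (h [^]\<^bsub>AAut d k\<^esub> n)" and strict: "(h [^]\<^bsub>AAut d k\<^esub> n) ` B \<subset> B"
    using tr unfolding translation_def by blast
  define f where "f = h [^]\<^bsub>AAut d k\<^esub> n"
  have fc: "f \<in> carrier (AAut d k)" unfolding f_def using hc by simp
  have fa: "almost_aut d k f" using fc by (simp add: aa_carrier)
  have fbij: "bij_betw f ?bd ?bd" using fa by (rule aa_bij)
  have fA: "f ` ?bd = ?bd" using fbij by (simp add: bij_betw_def)
  obtain p0 n0 where p0: "p0 \<in> ?bd" and Beq: "B = cyl d k p0 n0" using ball_cyl[OF d2 B] by blast
  have n0: "n0 \<ge> 1"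
  proof (rule ccontr)
    assume "\<not> n0 \<ge> 1"
    then have "n0 = 0" by simp
    then have "B = ?bd" using Beq by simp
    then show False using strict fA unfolding f_def by simp
  qed
  obtain c where cpos: "c > 0" and homB: "\<forall>x\<in>B. \<forall>y\<in>B. tdist d (f x) (f y) = c * tdist d x y"
    using hom unfolding homothety_on_def f_def by blast
  have fB: "\<And>x. x \<in> B \<Longrightarrow> f x \<in> B" using strict unfolding f_def by blast
  have Bsub: "B \<subseteq> ?bd" using Beq cyl_sub by blast
  have injB: "inj_on f B" using fbij Bsub unfolding bij_betw_def by (metis inj_on_subset)
  obtain m where m: "c / real d ^ n0 = 1 / real d ^ m"
    using hom_const[OF d2 p0 n0, of f c] injB homB Beq by auto
  have p0B: "p0 \<in> B" using Beq p0 cyl_center by blast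
  obtain x1 where x1: "x1 \<in> B" "tdist d p0 x1 = 1 / real d ^ n0"
    using exists_far[OF d2 p0 n0] Beq by blast
  have "tdist d (f p0) (f x1) = 1 / real d ^ m" using homB p0B x1 m by simp
  moreover have "tdist d (f p0) (f x1) \<le> 1 / real d ^ n0"
  proof -
    have "f p0 \<in> cyl d k p0 n0" "f x1 \<in> cyl d k p0 n0" using fB p0B x1(1) Beq by auto
    then have "\<forall>i<n0. f p0 i = f x1 i" unfolding cyl_def by auto
    then show ?thesis using tdist_le_iff[OF d2] by blast
  qed
  ultimately have mn0: "n0 \<le> m" using inv_pow_le_iff[OF d2] by simp
  have mne: "m \<noteq> n0"
  proof
    assume "m = n0"
    have "f ` B = cyl d k (f p0) m"
      unfolding Beq
      by (rule image_cyl[OF d2 fbij aa_inv_cont[OF fa] p0 n0 _ _ m]) (use n0 \<open>m = n0\<close> homB Beq in auto)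
    also have "\<dots> = B" using \<open>m = n0\<close> fB[OF p0B] Beq cyl_recenter[of "f p0" d k p0 n0] by simp
    finally show False using strict unfolding f_def by simp
  qed
  have c1: "c < 1"
  proof -
    have "c = real d ^ n0 / real d ^ m" using m d2 by (simp add: field_simps)
    moreover have "real d ^ n0 < real d ^ m" using mn0 mne d2 by simp
    ultimately show ?thesis using d2 by simp
  qed
  obtain p where pB: "p \<in> B" and fp: "f p \<noteq> p"
  proof -
    have "\<not> (\<forall>p\<in>B. f p = p)"
    proof
      assume "\<forall>p\<in>B. f p = p"
      then have "f ` B = B" by simp
      then show False using strict unfolding f_def by simp
    qed
    then show ?thesis using that by blast
  qed
  define \<delta> where "\<delta> = tdist d p (f p)"
  have dpos: "\<delta> > 0"
  proof -
    have "p \<noteq> f p" using fp by simp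
    then obtain N where "\<delta> = 1 / real d ^ N" unfolding \<delta>_def using tdist_disc by blast
    then show ?thesis using d2 by simp
  qed
  have FB: "(f ^^ j) x \<in> B" if "x \<in> B" for x j
    using that by (induction j) (auto intro: fB)
  have Fhom: "tdist d ((f ^^ j) x) ((f ^^ j) y) = c ^ j * tdist d x y" if "x \<in> B" "y \<in> B" for x y j
    using that
  proof (induction j)
    case (Suc j)
    have "tdist d ((f ^^ Suc j) x) ((f ^^ Suc j) y) = c * tdist d ((f ^^ j) x) ((f ^^ j) y)"
      using homB FB[OF Suc.prems(1)] FB[OF Suc.prems(2)] by simp
    then show ?case using Suc by simp
  qed simp
  have cj: "c ^ j \<le> c" if "j \<ge> 1" for j
    using power_decreasing[OF that, of c] cpos c1 by simp
  have cj1: "c ^ j \<le> 1" for j using cpos c1 by (simp add: power_le_one)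
  have claim1: "tdist d (f p) ((f ^^ j) p) \<le> c * \<delta>" if "j \<ge> 1" for j
    using that
  proof (induction j rule: dec_induct)
    case base
    then show ?case using cpos dpos by simp
  next
    case (step j)
    have e: "(f ^^ Suc j) p = (f ^^ j) (f p)" by (simp add: funpow_Suc_right del: funpow.simps(2))
    have "tdist d ((f ^^ j) p) ((f ^^ j) (f p)) = c ^ j * \<delta>"
      using Fhom[OF pB fB[OF pB]] unfolding \<delta>_def by simp
    also have "\<dots> \<le> c * \<delta>" using cj[OF step(1)] dpos by (simp add: mult_right_mono)
    finally have "tdist d ((f ^^ j) p) ((f ^^ Suc j) p) \<le> c * \<delta>" using e by simp
    then show ?case using tdist_ultra[OF d2, of "f p" "(f ^^ Suc j) p" "(f ^^ j) p"] step(3) by simp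
  qed
  have claim2: "tdist d p ((f ^^ j) p) \<ge> \<delta>" if "j \<ge> 1" for j
  proof (rule ccontr)
    assume a: "\<not> tdist d p ((f ^^ j) p) \<ge> \<delta>"
    have "tdist d ((f ^^ j) p) (f p) \<le> c * \<delta>" using claim1[OF that] tdist_sym[of d "f p" "(f ^^ j) p"] by simp
    also have "\<dots> < \<delta>" using c1 dpos by simp
    finally have "tdist d ((f ^^ j) p) (f p) < \<delta>" .
    then have "\<delta> < \<delta>" using a tdist_ultra[OF d2, of p "f p" "(f ^^ j) p"] unfolding \<delta>_def by simp
    then show False by simp
  qed
  obtain J where J: "1 / real d ^ J < \<delta>" using arch_inv_pow[OF d2 dpos] by blast
  define L where "L = max J n0"
  have L: "1 / real d ^ L < \<delta>" using J inv_pow_le_iff[OF d2, of L J] unfolding L_def by simp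
  define C where "C = cyl d k p L"
  have pb: "p \<in> ?bd" using pB Bsub by blast
  have CB: "C \<subseteq> B"
  proof -
    have "C \<subseteq> cyl d k p n0" unfolding C_def L_def by (rule cyl_mono) simp
    also have "\<dots> = B" using pB Beq cyl_recenter[of p d k p0 n0] by simp
    finally show ?thesis .
  qed
  have Cp: "proper_ball d k C" unfolding C_def using cyl_proper_ball[OF d2 k2 pb] n0 L_def by simp
  have disj: "(f ^^ j) ` C \<inter> C = {}" if j: "j \<ge> 1" for j
  proof (rule ccontr)
    assume "(f ^^ j) ` C \<inter> C \<noteq> {}"
    then obtain y where y: "y \<in> C" "(f ^^ j) y \<in> C" by blast
    have yB: "y \<in> B" using y CB by blast
    have a1: "tdist d p ((f ^^ j) y) \<le> 1 / real d ^ L" using y(2) unfolding C_def cyl_tdist[OF d2] by simp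
    have "tdist d ((f ^^ j) y) ((f ^^ j) p) = c ^ j * tdist d y p" using Fhom[OF yB pB] .
    also have "\<dots> \<le> tdist d y p" using mult_right_mono[OF cj1[of j] tdist_nonneg[of d y p]] by simp
    also have "\<dots> \<le> 1 / real d ^ L" using y(1) tdist_sym unfolding C_def cyl_tdist[OF d2] by simp
    finally have a2: "tdist d ((f ^^ j) y) ((f ^^ j) p) \<le> 1 / real d ^ L" .
    have "tdist d p ((f ^^ j) p) \<le> 1 / real d ^ L"
      using tdist_ultra[OF d2, of p "(f ^^ j) p" "(f ^^ j) y"] a1 a2 by simp
    then show False using claim2[OF j] L by simp
  qed
  show ?thesis using fc Cp disj unfolding f_def by blast
qed



lemma (in group) comm_trick:
  assumes c: "g \<in> carrier G" "p \<in> carrier G" "g' \<in> carrier G" "q \<in> carrier G"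
    and pg: "p \<otimes> g' = g' \<otimes> p" and pq: "p \<otimes> q = q \<otimes> p" and qg: "q \<otimes> g = g \<otimes> q"
  shows "(g \<otimes> p) \<otimes> (g' \<otimes> q) \<otimes> inv (g \<otimes> p) \<otimes> inv (g' \<otimes> q) = g \<otimes> g' \<otimes> inv g \<otimes> inv g'"
proof -
  have qig: "q \<otimes> inv g = inv g \<otimes> q"
  proof -
    have "inv g \<otimes> (g \<otimes> q) \<otimes> inv g = q \<otimes> inv g" using c by (simp add: m_assoc[symmetric])
    moreover have "inv g \<otimes> (q \<otimes> g) \<otimes> inv g = inv g \<otimes> q" using c by (simp add: m_assoc)
    ultimately show ?thesis using qg by simp
  qed
  have pg2: "p \<otimes> (g' \<otimes> z) = g' \<otimes> (p \<otimes> z)" if "z \<in> carrier G" for z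
    using pg c that by (simp add: m_assoc[symmetric])
  have pq2: "p \<otimes> (q \<otimes> z) = q \<otimes> (p \<otimes> z)" if "z \<in> carrier G" for z
    using pq c that by (simp add: m_assoc[symmetric])
  have qig2: "q \<otimes> (inv g \<otimes> z) = inv g \<otimes> (q \<otimes> z)" if "z \<in> carrier G" for z
    using qig c that by (simp add: m_assoc[symmetric])
  have canc: "x \<otimes> (inv x \<otimes> z) = z" if "x \<in> carrier G" "z \<in> carrier G" for x z
    using that by (simp add: m_assoc[symmetric])
  show ?thesis
    using c by (simp add: m_assoc inv_mult_group pg2 pq2 qig2 canc)
qed

definition fixes_out :: "(ray \<Rightarrow> ray) \<Rightarrow> ray set \<Rightarrow> bool" where
  "fixes_out \<sigma> S \<longleftrightarrow> (\<forall>z. z \<notin> S \<longrightarrow> \<sigma> z = z)"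

context
  fixes d k :: nat
  assumes d2: "d \<ge> 2" and k2: "k \<ge> 2"
begin

interpretation G: group "AAut d k" by (rule AAut_group[OF d2 k2])

lemma inv_left: "\<sigma> \<in> carrier (AAut d k) \<Longrightarrow> (inv\<^bsub>AAut d k\<^esub> \<sigma>) (\<sigma> z) = z"
  using G.l_inv[of \<sigma>] by (simp add: AAut_simps fun_eq_iff)

lemma inv_right: "\<sigma> \<in> carrier (AAut d k) \<Longrightarrow> \<sigma> ((inv\<^bsub>AAut d k\<^esub> \<sigma>) z) = z"
  using G.r_inv[of \<sigma>] by (simp add: AAut_simps fun_eq_iff)

lemma fix_maps:
  assumes "\<sigma> \<in> carrier (AAut d k)" "fixes_out \<sigma> S" "z \<in> S"
  shows "\<sigma> z \<in> S"
proof (rule ccontr)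
  assume "\<sigma> z \<notin> S"
  then have "\<sigma> (\<sigma> z) = \<sigma> z" using assms(2) unfolding fixes_out_def by blast
  then have "(inv\<^bsub>AAut d k\<^esub> \<sigma>) (\<sigma> (\<sigma> z)) = (inv\<^bsub>AAut d k\<^esub> \<sigma>) (\<sigma> z)" by simp
  then have "\<sigma> z = z" using inv_left[OF assms(1)] by simp
  then show False using \<open>\<sigma> z \<notin> S\<close> assms(3) by simp
qed

lemma fix_comm:
  assumes "\<sigma> \<in> carrier (AAut d k)" "\<tau> \<in> carrier (AAut d k)" "fixes_out \<sigma> S" "fixes_out \<tau> T" "S \<inter> T = {}"
  shows "\<sigma> \<otimes>\<^bsub>AAut d k\<^esub> \<tau> = \<tau> \<otimes>\<^bsub>AAut d k\<^esub> \<sigma>"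
  unfolding AAut_simps
proof
  fix z
  show "(\<sigma> \<circ> \<tau>) z = (\<tau> \<circ> \<sigma>) z"
  proof (cases "z \<in> S")
    case True
    then have "\<tau> z = z" "\<sigma> z \<in> S" using assms fix_maps unfolding fixes_out_def by blast+
    then have "\<tau> (\<sigma> z) = \<sigma> z" using assms(4,5) unfolding fixes_out_def by blast
    then show ?thesis using \<open>\<tau> z = z\<close> by simp
  next
    case False
    then have sz: "\<sigma> z = z" using assms(3) unfolding fixes_out_def by blast
    show ?thesis
    proof (cases "z \<in> T")
      case True
      then have "\<tau> z \<in> T" using assms fix_maps by blast
      then have "\<sigma> (\<tau> z) = \<tau> z" using assms(3,5) unfolding fixes_out_def by blast
      then show ?thesis using sz by simp
    next
      case False
      then have "\<tau> z = z" using assms(4) unfolding fixes_out_def by blast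
      then show ?thesis using sz by simp
    qed
  qed
qed

lemma fix_inv:
  assumes "\<sigma> \<in> carrier (AAut d k)" "fixes_out \<sigma> S"
  shows "fixes_out (inv\<^bsub>AAut d k\<^esub> \<sigma>) S"
  unfolding fixes_out_def
proof (intro allI impI)
  fix z assume "z \<notin> S"
  then have "\<sigma> z = z" using assms(2) unfolding fixes_out_def by blast
  then show "(inv\<^bsub>AAut d k\<^esub> \<sigma>) z = z" using inv_left[OF assms(1), of z] by simp
qed

lemma fix_conj:
  assumes "a \<in> carrier (AAut d k)" "\<sigma> \<in> carrier (AAut d k)" "fixes_out \<sigma> S"
  shows "fixes_out (a \<otimes>\<^bsub>AAut d k\<^esub> \<sigma> \<otimes>\<^bsub>AAut d k\<^esub> inv\<^bsub>AAut d k\<^esub> a) (a ` S)"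
  unfolding fixes_out_def AAut_simps
proof (intro allI impI)
  fix z assume z: "z \<notin> a ` S"
  have "(inv\<^bsub>AAut d k\<^esub> a) z \<notin> S"
  proof
    assume "(inv\<^bsub>AAut d k\<^esub> a) z \<in> S"
    then have "a ((inv\<^bsub>AAut d k\<^esub> a) z) \<in> a ` S" by (rule imageI)
    then show False using z inv_right[OF assms(1)] by simp
  qed
  then have "\<sigma> ((inv\<^bsub>AAut d k\<^esub> a) z) = (inv\<^bsub>AAut d k\<^esub> a) z" using assms(3) unfolding fixes_out_def by blast
  then show "(a \<circ> \<sigma> \<circ> inv\<^bsub>AAut d k\<^esub> a) z = z" using inv_right[OF assms(1)] by simp
qed

lemma rcosets_sub: "rcosets\<^bsub>(AAut d k)\<lparr>carrier := K\<rparr>\<^esub> H = (\<lambda>x. H #>\<^bsub>AAut d k\<^esub> x) ` K"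
  unfolding RCOSETS_def r_coset_def by auto

lemma pigeon:
  assumes H: "subgroup H (AAut d k)" and HL: "H \<subseteq> \<Lambda>" and Lsub: "subgroup \<Lambda> (AAut d k)"
    and fin: "finite_index_in d k H \<Lambda>" and a: "a \<in> \<Lambda>"
  shows "\<exists>m::nat. m \<ge> 1 \<and> a [^]\<^bsub>AAut d k\<^esub> m \<in> H"
proof -
  have ac: "a \<in> carrier (AAut d k)" using a Lsub subgroup.subset by blast
  have finR: "finite ((\<lambda>x. H #>\<^bsub>AAut d k\<^esub> x) ` \<Lambda>)"
    using fin unfolding finite_index_in_def rcosets_sub .
  define \<phi> where "\<phi> i = H #>\<^bsub>AAut d k\<^esub> (a [^]\<^bsub>AAut d k\<^esub> (i::nat))" for i
  have powL: "a [^]\<^bsub>AAut d k\<^esub> (i::nat) \<in> \<Lambda>" for i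
    using G.subgroup_int_pow_closed[OF Lsub a, of "int i"] by (simp add: int_pow_int)
  have "range \<phi> \<subseteq> (\<lambda>x. H #>\<^bsub>AAut d k\<^esub> x) ` \<Lambda>" unfolding \<phi>_def using powL by blast
  then have "finite (range \<phi>)" using finR finite_subset by blast
  then have "\<not> inj \<phi>" using finite_imageD infinite_UNIV_nat by blast
  then obtain i j where ij: "i \<noteq> j" "\<phi> i = \<phi> j" unfolding inj_def by blast
  have "\<exists>i j. i < j \<and> \<phi> i = \<phi> j"
  proof (cases "i < j")
    case True then show ?thesis using ij by blast
  next
    case False then have "j < i" using ij by simp
    then show ?thesis using ij by metis
  qed
  then obtain i j where ij: "i < j" "\<phi> i = \<phi> j" by blast
  have cj: "a [^]\<^bsub>AAut d k\<^esub> j \<in> carrier (AAut d k)" "a [^]\<^bsub>AAut d k\<^esub> i \<in> carrier (AAut d k)"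
    using ac by simp_all
  have "a [^]\<^bsub>AAut d k\<^esub> j \<in> H #>\<^bsub>AAut d k\<^esub> (a [^]\<^bsub>AAut d k\<^esub> j)" by (rule G.rcos_self[OF cj(1) H])
  also have "\<dots> = H #>\<^bsub>AAut d k\<^esub> (a [^]\<^bsub>AAut d k\<^esub> i)" using ij(2) unfolding \<phi>_def by simp
  finally have "a [^]\<^bsub>AAut d k\<^esub> j \<otimes>\<^bsub>AAut d k\<^esub> inv\<^bsub>AAut d k\<^esub> (a [^]\<^bsub>AAut d k\<^esub> i) \<in> H"
    using subgroup.rcos_module_imp[OF H G.is_group cj(2)] by blast
  moreover have "a [^]\<^bsub>AAut d k\<^esub> j = a [^]\<^bsub>AAut d k\<^esub> (j - i) \<otimes>\<^bsub>AAut d k\<^esub> a [^]\<^bsub>AAut d k\<^esub> i"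
    using G.nat_pow_mult[OF ac, of "j - i" i] ij(1) by simp
  ultimately have "a [^]\<^bsub>AAut d k\<^esub> (j - i) \<in> H"
    using ac by (simp add: G.m_assoc)
  then show ?thesis using ij(1) by (intro exI[of _ "j - i"]) simp
qed

lemma conj_subgroup:
  assumes L: "subgroup \<Lambda> (AAut d k)" and x: "x \<in> carrier (AAut d k)"
  shows "subgroup (conj_set d k x \<Lambda>) (AAut d k)"
proof (rule G.subgroupI)
  have Lc: "\<Lambda> \<subseteq> carrier (AAut d k)" using L subgroup.subset by blast
  show "conj_set d k x \<Lambda> \<subseteq> carrier (AAut d k)" unfolding conj_set_def using Lc x by auto
  show "conj_set d k x \<Lambda> \<noteq> {}" unfolding conj_set_def using subgroup.one_closed[OF L] by blast
  fix a assume "a \<in> conj_set d k x \<Lambda>"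
  then obtain l where l: "l \<in> \<Lambda>" "a = x \<otimes>\<^bsub>AAut d k\<^esub> l \<otimes>\<^bsub>AAut d k\<^esub> inv\<^bsub>AAut d k\<^esub> x"
    unfolding conj_set_def by blast
  have lc: "l \<in> carrier (AAut d k)" using l Lc by blast
  have "inv\<^bsub>AAut d k\<^esub> a = x \<otimes>\<^bsub>AAut d k\<^esub> inv\<^bsub>AAut d k\<^esub> l \<otimes>\<^bsub>AAut d k\<^esub> inv\<^bsub>AAut d k\<^esub> x"
    using l(2) lc x by (simp add: G.inv_mult_group G.m_assoc)
  moreover have "inv\<^bsub>AAut d k\<^esub> l \<in> \<Lambda>" using subgroup.m_inv_closed[OF L l(1)] .
  ultimately show "inv\<^bsub>AAut d k\<^esub> a \<in> conj_set d k x \<Lambda>" unfolding conj_set_def by blast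
  fix b assume "b \<in> conj_set d k x \<Lambda>"
  then obtain l' where l': "l' \<in> \<Lambda>" "b = x \<otimes>\<^bsub>AAut d k\<^esub> l' \<otimes>\<^bsub>AAut d k\<^esub> inv\<^bsub>AAut d k\<^esub> x"
    unfolding conj_set_def by blast
  have lc': "l' \<in> carrier (AAut d k)" using l' Lc by blast
  have "a \<otimes>\<^bsub>AAut d k\<^esub> b = x \<otimes>\<^bsub>AAut d k\<^esub> (l \<otimes>\<^bsub>AAut d k\<^esub> l') \<otimes>\<^bsub>AAut d k\<^esub> inv\<^bsub>AAut d k\<^esub> x"
  proof -
    have e: "inv\<^bsub>AAut d k\<^esub> x \<otimes>\<^bsub>AAut d k\<^esub> (x \<otimes>\<^bsub>AAut d k\<^esub> z) = z" if "z \<in> carrier (AAut d k)" for z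
      using that x by (simp add: G.m_assoc[symmetric])
    show ?thesis using l(2) l'(2) lc lc' x by (simp add: G.m_assoc e)
  qed
  moreover have "l \<otimes>\<^bsub>AAut d k\<^esub> l' \<in> \<Lambda>" using subgroup.m_closed[OF L l(1) l'(1)] .
  ultimately show "a \<otimes>\<^bsub>AAut d k\<^esub> b \<in> conj_set d k x \<Lambda>" unfolding conj_set_def by blast
qed

end



context
  fixes d k :: nat
  assumes d2: "d \<ge> 2" and k2: "k \<ge> 2"
begin

interpretation G: group "AAut d k" by (rule AAut_group[OF d2 k2])

lemma fi_inter:
  assumes H: "subgroup H (AAut d k)" and Lam: "subgroup \<Lambda> (AAut d k)" and L: "subgroup L (AAut d k)"
    and HL: "H \<subseteq> \<Lambda>" and LL: "L \<subseteq> \<Lambda>" and fin: "finite_index_in d k H \<Lambda>"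
  shows "finite_index_in d k (H \<inter> L) L"
proof -
  define K where "K = H \<inter> L"
  have K: "subgroup K (AAut d k)" unfolding K_def by (rule G.subgroups_Inter_pair[OF H L])
  define \<psi> where "\<psi> l = H #>\<^bsub>AAut d k\<^esub> l" for l
  have fin1: "finite (\<psi> ` \<Lambda>)" using fin unfolding finite_index_in_def rcosets_sub[OF d2 k2] \<psi>_def .
  have fin2: "finite (\<psi> ` L)" using finite_subset[OF image_mono[OF LL] fin1] .
  have Lc: "L \<subseteq> carrier (AAut d k)" using L subgroup.subset by blast
  have key: "K #>\<^bsub>AAut d k\<^esub> l1 = K #>\<^bsub>AAut d k\<^esub> l2" if l: "l1 \<in> L" "l2 \<in> L" "\<psi> l1 = \<psi> l2" for l1 l2
  proof -
    have c: "l1 \<in> carrier (AAut d k)" "l2 \<in> carrier (AAut d k)" using l Lc by blast+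
    have "l1 \<in> H #>\<^bsub>AAut d k\<^esub> l1" by (rule G.rcos_self[OF c(1) H])
    then have "l1 \<in> H #>\<^bsub>AAut d k\<^esub> l2" using l(3) unfolding \<psi>_def by simp
    then have "l1 \<otimes>\<^bsub>AAut d k\<^esub> inv\<^bsub>AAut d k\<^esub> l2 \<in> H"
      using subgroup.rcos_module_imp[OF H G.is_group c(2)] by blast
    moreover have "l1 \<otimes>\<^bsub>AAut d k\<^esub> inv\<^bsub>AAut d k\<^esub> l2 \<in> L"
      using l subgroup.m_closed[OF L] subgroup.m_inv_closed[OF L] by blast
    ultimately have "l1 \<otimes>\<^bsub>AAut d k\<^esub> inv\<^bsub>AAut d k\<^esub> l2 \<in> K" unfolding K_def by blast
    then have "l1 \<in> K #>\<^bsub>AAut d k\<^esub> l2" using subgroup.rcos_module_rev[OF K G.is_group c(2) c(1)] by blast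
    then show ?thesis using G.repr_independence[OF _ c(2) K] by simp
  qed
  have eq: "(\<lambda>l. K #>\<^bsub>AAut d k\<^esub> l) ` L = (\<lambda>Y. K #>\<^bsub>AAut d k\<^esub> (SOME l. l \<in> L \<and> \<psi> l = Y)) ` (\<psi> ` L)"
  proof -
    have "K #>\<^bsub>AAut d k\<^esub> (SOME l'. l' \<in> L \<and> \<psi> l' = \<psi> l) = K #>\<^bsub>AAut d k\<^esub> l" if "l \<in> L" for l
    proof -
      have "\<exists>l'. l' \<in> L \<and> \<psi> l' = \<psi> l" using that by blast
      then have s: "(SOME l'. l' \<in> L \<and> \<psi> l' = \<psi> l) \<in> L \<and> \<psi> (SOME l'. l' \<in> L \<and> \<psi> l' = \<psi> l) = \<psi> l"
        by (rule someI_ex)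
      show ?thesis using key[OF conjunct1[OF s] that conjunct2[OF s]] .
    qed
    then show ?thesis by (auto simp: image_image intro!: image_cong)
  qed
  have "finite ((\<lambda>l. K #>\<^bsub>AAut d k\<^esub> l) ` L)" unfolding eq using fin2 by simp
  then show ?thesis unfolding finite_index_in_def rcosets_sub[OF d2 k2] K_def .
qed

end



context
  fixes d k :: nat
  assumes d2: "d \<ge> 2" and k2: "k \<ge> 2"
begin

interpretation G: group "AAut d k" by (rule AAut_group[OF d2 k2])

lemma main_aux:
  fixes \<Lambda> GG :: "(ray \<Rightarrow> ray) set"
  assumes Lam: "subgroup \<Lambda> (AAut d k)" and tr: "\<exists>h\<in>\<Lambda>. translation d k h"
    and Gs: "subgroup GG (AAut d k)" and comm: "commensurates d k GG \<Lambda>"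
  shows "\<exists>B. proper_ball d k B \<and>
           derived (AAut d k) (rigid_stab d k GG B) \<subseteq> \<Lambda> \<and>
           (\<forall>L. subgroup L (AAut d k) \<and> L \<subseteq> derived (AAut d k) (rigid_stab d k GG B) \<and>
                no_proper_fi_subgroup d k L \<longrightarrow>
                generate (AAut d k) (\<Union>g\<in>GG. conj_set d k g L) \<subseteq> \<Lambda>)"
proof -
  let ?A = "AAut d k"
  obtain h where hL: "h \<in> \<Lambda>" and htr: "translation d k h" using tr by blast
  obtain f C where fc: "f \<in> carrier ?A" and fn: "\<exists>n::int. f = h [^]\<^bsub>?A\<^esub> n" and Cp: "proper_ball d k C"
    and disj: "\<forall>j\<ge>1. (f ^^ j) ` C \<inter> C = {}"
    using translation_ball[OF d2 k2 htr] by blast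
  have fL: "f \<in> \<Lambda>" using fn G.subgroup_int_pow_closed[OF Lam hL] by blast
  have Lc: "\<Lambda> \<subseteq> carrier ?A" using Lam subgroup.subset by blast
  have Gc: "GG \<subseteq> carrier ?A" using Gs subgroup.subset by blast
  define H where "H g = conj_set d k (inv\<^bsub>?A\<^esub> g) \<Lambda> \<inter> \<Lambda>" for g
  have Hsub: "subgroup (H g) ?A" if "g \<in> GG" for g
    unfolding H_def
    by (rule G.subgroups_Inter_pair[OF conj_subgroup[OF d2 k2 Lam] Lam]) (use that Gc in auto)
  have HL: "H g \<subseteq> \<Lambda>" for g unfolding H_def by blast
  have Hfin: "finite_index_in d k (H g) \<Lambda>" if "g \<in> GG" for g
    using comm subgroup.m_inv_closed[OF Gs that] unfolding commensurates_def H_def by blast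
  have powH: "\<exists>m::nat. m \<ge> 1 \<and> f [^]\<^bsub>?A\<^esub> m \<in> H g" if "g \<in> GG" for g
    by (rule pigeon[OF d2 k2 Hsub[OF that] HL Lam Hfin[OF that] fL])
  have Hpow: "x [^]\<^bsub>?A\<^esub> (j::nat) \<in> H g" if "g \<in> GG" "x \<in> H g" for g x j
    using G.subgroup_int_pow_closed[OF Hsub[OF that(1)] that(2), of "int j"] by (simp add: int_pow_int)
  have conjH: "g \<otimes>\<^bsub>?A\<^esub> x \<otimes>\<^bsub>?A\<^esub> inv\<^bsub>?A\<^esub> g \<in> \<Lambda>" if gx: "g \<in> GG" "x \<in> conj_set d k (inv\<^bsub>?A\<^esub> g) \<Lambda>" for g x
  proof -
    obtain l where l: "l \<in> \<Lambda>" "x = inv\<^bsub>?A\<^esub> g \<otimes>\<^bsub>?A\<^esub> l \<otimes>\<^bsub>?A\<^esub> inv\<^bsub>?A\<^esub> (inv\<^bsub>?A\<^esub> g)"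
      using gx(2) unfolding conj_set_def by blast
    have gc: "g \<in> carrier ?A" using gx Gc by blast
    have lc: "l \<in> carrier ?A" using l Lc by blast
    have "g \<otimes>\<^bsub>?A\<^esub> x \<otimes>\<^bsub>?A\<^esub> inv\<^bsub>?A\<^esub> g = l"
    proof -
      have e: "g \<otimes>\<^bsub>?A\<^esub> (inv\<^bsub>?A\<^esub> g \<otimes>\<^bsub>?A\<^esub> z) = z" if "z \<in> carrier ?A" for z
        using gc that by (simp add: G.m_assoc[symmetric])
      show ?thesis using gc lc l(2) by (simp add: G.m_assoc e)
    qed
    then show ?thesis using l by simp
  qed
  have fixC: "fixes_out g C" if "g \<in> rigid_stab d k GG C" for g
    unfolding fixes_out_def
  proof (intro allI impI)
    fix z assume z: "z \<notin> C"
    have g: "g \<in> GG" "\<forall>x\<in>boundary d k - C. g x = x" using that unfolding rigid_stab_def by auto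
    show "g z = z"
    proof (cases "z \<in> boundary d k")
      case True then show ?thesis using g z by blast
    next
      case False
      have "almost_aut d k g" using g(1) Gc by (auto simp: aa_carrier)
      then show ?thesis using aa_out False by blast
    qed
  qed
  have commL: "g1 \<otimes>\<^bsub>?A\<^esub> g2 \<otimes>\<^bsub>?A\<^esub> inv\<^bsub>?A\<^esub> g1 \<otimes>\<^bsub>?A\<^esub> inv\<^bsub>?A\<^esub> g2 \<in> \<Lambda>"
    if g12: "g1 \<in> rigid_stab d k GG C" "g2 \<in> rigid_stab d k GG C" for g1 g2
  proof -
    have gG: "g1 \<in> GG" "g2 \<in> GG" using g12 unfolding rigid_stab_def by auto
    have gc: "g1 \<in> carrier ?A" "g2 \<in> carrier ?A" using gG Gc by auto
    obtain m1 :: nat where m1: "m1 \<ge> 1" "f [^]\<^bsub>?A\<^esub> m1 \<in> H g1" using powH[OF gG(1)] by blast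
    obtain m2 :: nat where m2: "m2 \<ge> 1" "f [^]\<^bsub>?A\<^esub> m2 \<in> H g2" using powH[OF gG(2)] by blast
    define J where "J = m1 * m2"
    have J1: "J \<ge> 1" unfolding J_def using m1 m2 by simp
    define a where "a = f [^]\<^bsub>?A\<^esub> J"
    define a2 where "a2 = a \<otimes>\<^bsub>?A\<^esub> a"
    have ac: "a \<in> carrier ?A" unfolding a_def using fc by simp
    have a2c: "a2 \<in> carrier ?A" unfolding a2_def using ac by simp
    have aH: "a \<in> H g1" unfolding a_def J_def
      using Hpow[OF gG(1) m1(2), of m2] G.nat_pow_pow[OF fc] by simp
    have a2eq: "a2 = f [^]\<^bsub>?A\<^esub> (m2 * (2 * m1))" unfolding a2_def a_def J_def
    proof -
      have "m1 * m2 + m1 * m2 = m2 * (2 * m1)" by simp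
      then show "f [^]\<^bsub>?A\<^esub> (m1 * m2) \<otimes>\<^bsub>?A\<^esub> f [^]\<^bsub>?A\<^esub> (m1 * m2) = f [^]\<^bsub>?A\<^esub> (m2 * (2 * m1))"
        using G.nat_pow_mult[OF fc, of "m1 * m2" "m1 * m2"] by metis
    qed
    have a2H: "a2 \<in> H g2" unfolding a2eq
      using Hpow[OF gG(2) m2(2), of "2 * m1"] G.nat_pow_pow[OF fc] by simp
    have aL: "a \<in> \<Lambda>" and a2L: "a2 \<in> \<Lambda>" using aH a2H HL by blast+
    define x where "x = g1 \<otimes>\<^bsub>?A\<^esub> a \<otimes>\<^bsub>?A\<^esub> inv\<^bsub>?A\<^esub> g1 \<otimes>\<^bsub>?A\<^esub> inv\<^bsub>?A\<^esub> a"
    define y where "y = g2 \<otimes>\<^bsub>?A\<^esub> a2 \<otimes>\<^bsub>?A\<^esub> inv\<^bsub>?A\<^esub> g2 \<otimes>\<^bsub>?A\<^esub> inv\<^bsub>?A\<^esub> a2"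
    have xL: "x \<in> \<Lambda>" unfolding x_def
      using subgroup.m_closed[OF Lam conjH[OF gG(1)] subgroup.m_inv_closed[OF Lam aL]] aH unfolding H_def by blast
    have yL: "y \<in> \<Lambda>" unfolding y_def
      using subgroup.m_closed[OF Lam conjH[OF gG(2)] subgroup.m_inv_closed[OF Lam a2L]] a2H unfolding H_def by blast
    have xyL: "x \<otimes>\<^bsub>?A\<^esub> y \<otimes>\<^bsub>?A\<^esub> inv\<^bsub>?A\<^esub> x \<otimes>\<^bsub>?A\<^esub> inv\<^bsub>?A\<^esub> y \<in> \<Lambda>"
      by (intro subgroup.m_closed[OF Lam] subgroup.m_inv_closed[OF Lam] xL yL)
    define p where "p = a \<otimes>\<^bsub>?A\<^esub> inv\<^bsub>?A\<^esub> g1 \<otimes>\<^bsub>?A\<^esub> inv\<^bsub>?A\<^esub> a"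
    define q where "q = a2 \<otimes>\<^bsub>?A\<^esub> inv\<^bsub>?A\<^esub> g2 \<otimes>\<^bsub>?A\<^esub> inv\<^bsub>?A\<^esub> a2"
    have pc: "p \<in> carrier ?A" and qc: "q \<in> carrier ?A" unfolding p_def q_def using ac a2c gc by simp_all
    have xeq: "x = g1 \<otimes>\<^bsub>?A\<^esub> p" unfolding x_def p_def using ac gc by (simp add: G.m_assoc)
    have yeq: "y = g2 \<otimes>\<^bsub>?A\<^esub> q" unfolding y_def q_def using a2c gc by (simp add: G.m_assoc)
    have fp: "fixes_out p (a ` C)" unfolding p_def
      by (rule fix_conj[OF d2 k2 ac _ fix_inv[OF d2 k2 gc(1) fixC[OF g12(1)]]]) (use gc in simp)
    have fq: "fixes_out q (a2 ` C)" unfolding q_def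
      by (rule fix_conj[OF d2 k2 a2c _ fix_inv[OF d2 k2 gc(2) fixC[OF g12(2)]]]) (use gc in simp)
    have afun: "a = f ^^ J" unfolding a_def by (rule pow_funpow)
    have a2fun: "a2 = a \<circ> a" unfolding a2_def by (simp add: AAut_simps)
    have d1: "a ` C \<inter> C = {}" unfolding afun using disj J1 by blast
    have d2': "a2 ` C \<inter> C = {}"
    proof -
      have "a2 = f ^^ (J + J)" unfolding a2fun afun by (simp add: funpow_add)
      then show ?thesis using disj J1 by simp
    qed
    have ainj: "inj a"
    proof (rule injI)
      fix u v assume "a u = a v"
      then have "(inv\<^bsub>?A\<^esub> a) (a u) = (inv\<^bsub>?A\<^esub> a) (a v)" by simp
      then show "u = v" using inv_left[OF d2 k2 ac] by simp
    qed
    have d3: "a ` C \<inter> a2 ` C = {}"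
    proof -
      have "a2 ` C = a ` (a ` C)" unfolding a2fun by (simp add: image_comp)
      then have "a ` C \<inter> a2 ` C = a ` (C \<inter> a ` C)" using inj_on_image_Int[OF ainj, of C "a ` C"] by simp
      then show ?thesis using d1 by auto
    qed
    have c1: "p \<otimes>\<^bsub>?A\<^esub> g2 = g2 \<otimes>\<^bsub>?A\<^esub> p"
      by (rule fix_comm[OF d2 k2 pc gc(2) fp fixC[OF g12(2)]]) (use d1 in simp)
    have c2: "p \<otimes>\<^bsub>?A\<^esub> q = q \<otimes>\<^bsub>?A\<^esub> p"
      by (rule fix_comm[OF d2 k2 pc qc fp fq]) (use d3 in simp)
    have c3: "q \<otimes>\<^bsub>?A\<^esub> g1 = g1 \<otimes>\<^bsub>?A\<^esub> q"
      by (rule fix_comm[OF d2 k2 qc gc(1) fq fixC[OF g12(1)]]) (use d2' in simp)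
    have "x \<otimes>\<^bsub>?A\<^esub> y \<otimes>\<^bsub>?A\<^esub> inv\<^bsub>?A\<^esub> x \<otimes>\<^bsub>?A\<^esub> inv\<^bsub>?A\<^esub> y
          = g1 \<otimes>\<^bsub>?A\<^esub> g2 \<otimes>\<^bsub>?A\<^esub> inv\<^bsub>?A\<^esub> g1 \<otimes>\<^bsub>?A\<^esub> inv\<^bsub>?A\<^esub> g2"
      unfolding xeq yeq by (rule G.comm_trick[OF gc(1) pc gc(2) qc c1 c2 c3])
    then show ?thesis using xyL by simp
  qed
  have der: "derived ?A (rigid_stab d k GG C) \<subseteq> \<Lambda>"
    unfolding derived_def
    by (rule G.generate_subgroup_incl[OF _ Lam]) (use commL in blast)
  have part2: "generate ?A (\<Union>g\<in>GG. conj_set d k g L) \<subseteq> \<Lambda>"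
    if L: "subgroup L ?A" "L \<subseteq> derived ?A (rigid_stab d k GG C)" "no_proper_fi_subgroup d k L" for L
  proof (rule G.generate_subgroup_incl[OF _ Lam])
    have LL: "L \<subseteq> \<Lambda>" using L(2) der by blast
    show "(\<Union>g\<in>GG. conj_set d k g L) \<subseteq> \<Lambda>"
    proof (rule UN_least)
      fix g assume g: "g \<in> GG"
      have Ksub: "subgroup (H g \<inter> L) ?A" by (rule G.subgroups_Inter_pair[OF Hsub[OF g] L(1)])
      have Kfi: "finite_index_in d k (H g \<inter> L) L"
        by (rule fi_inter[OF d2 k2 Hsub[OF g] Lam L(1) HL LL Hfin[OF g]])
      have "H g \<inter> L = L" using L(3) Ksub Kfi unfolding no_proper_fi_subgroup_def by blast
      then have "L \<subseteq> conj_set d k (inv\<^bsub>?A\<^esub> g) \<Lambda>" unfolding H_def by blast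
      then have sub: "L \<subseteq> conj_set d k (inv\<^bsub>?A\<^esub> g) \<Lambda>" .
      show "conj_set d k g L \<subseteq> \<Lambda>"
      proof
        fix z assume "z \<in> conj_set d k g L"
        then obtain l where l: "l \<in> L" "z = g \<otimes>\<^bsub>?A\<^esub> l \<otimes>\<^bsub>?A\<^esub> inv\<^bsub>?A\<^esub> g"
          unfolding conj_set_def by blast
        have "l \<in> conj_set d k (inv\<^bsub>?A\<^esub> g) \<Lambda>" using sub l(1) by blast
        then show "z \<in> \<Lambda>" using conjH[OF g] l(2) by simp
      qed
    qed
  qed
  show ?thesis
    using Cp der part2 by blast
qed

end


theorem mainTheorem16:
  fixes d k :: nat and \<Lambda> G :: "(ray \<Rightarrow> ray) set"
  assumes "d \<ge> 2" and "k \<ge> 2"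
    and "subgroup \<Lambda> (AAut d k)" and "\<exists>h\<in>\<Lambda>. translation d k h"
    and "subgroup G (AAut d k)" and "commensurates d k G \<Lambda>"
  shows "\<exists>B. proper_ball d k B \<and>
           derived (AAut d k) (rigid_stab d k G B) \<subseteq> \<Lambda> \<and>
           (\<forall>L. subgroup L (AAut d k) \<and> L \<subseteq> derived (AAut d k) (rigid_stab d k G B) \<and>
                no_proper_fi_subgroup d k L \<longrightarrow>
                generate (AAut d k) (\<Union>g\<in>G. conj_set d k g L) \<subseteq> \<Lambda>)"
  by (rule main_aux[OF assms])

end
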